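(* Let $K$ be a field of characteristic $0$ such that $K_{\mathrm{ab}}/\mathbb{Q}$ has finite degree, and let $\Lambda$ be its Chevalley–Bass number. (i) $\Lambda$ is the smallest positive integer $L$ such that, for every integer $n>0$, the image of the inflation map $H^1(G_{Ln},\mu_{Ln})\to H^1(K,\mu_{Ln})$ lies in the image of the map $H^1(K,\mu_L)\to H^1(K,\mu_{Ln})$ induced by the inclusion $\mu_L\subseteq\mu_{Ln}$. (ii) $\Lambda$ is the smallest positive integer $L$ such that, for every integer $n>0$, the map $H^1(G_{Ln},\mu_L)\to H^1(G_{Ln},\mu_{Ln})$ induced by the inclusion $\mu_L\subseteq\mu_{Ln}$ is surjective.
   Context: $K_{\mathrm{ab}}$ is the maximal abelian subextension of $K/\mathbb{Q}$. The Chevalley–Bass number of $K$ is the smallest positive integer $\Lambda$ such that for every positive integer $n$, $(K(\zeta_{\Lambda n})^\times)^{\Lambda n}\cap K^\times\subseteq (K^\times)^n$. $\mu_n$ denotes the Galois module of $n$th roots of unity in an algebraic closure of $K$, $\zeta_n$ a primitive $n$th root of unity, $G_n:=\mathrm{Gal}(K(\zeta_n)/K)$; $H^1(K,M)$ denotes Galois cohomology of the absolute Galois group of $K$. *)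

theory Defs
  imports "HOL-Computational_Algebra.Polynomial" "HOL-Library.FuncSet"
begin

text \<open>Setting: \<Omega> is an algebraically closed field of characteristic 0 (a type),
  K \<subseteq> \<Omega> is a subfield over which \<Omega> is algebraic, so \<Omega> is an algebraic
  closure of K.\<close>

definition is_subfield :: "'a::field set \<Rightarrow> bool" where
  "is_subfield F \<longleftrightarrow> 0 \<in> F \<and> 1 \<in> F \<and>
     (\<forall>x\<in>F. \<forall>y\<in>F. x + y \<in> F \<and> x - y \<in> F \<and> x * y \<in> F) \<and>
     (\<forall>x\<in>F. inverse x \<in> F)"

definition field_gen :: "'a::field set \<Rightarrow> 'a set" where
  "field_gen S = \<Inter>{F. is_subfield F \<and> S \<subseteq> F}"

definition algebraic_over :: "'a::field set \<Rightarrow> 'a \<Rightarrow> bool" where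
  "algebraic_over K x \<longleftrightarrow> (\<exists>p::'a poly. p \<noteq> 0 \<and> (\<forall>i. coeff p i \<in> K) \<and> poly p x = 0)"

definition mu :: "nat \<Rightarrow> 'a::field set" where
  "mu n = {z. z ^ n = 1}"

definition cyc :: "'a::field set \<Rightarrow> nat \<Rightarrow> 'a set" where
  "cyc K n = field_gen (K \<union> mu n)"

definition abs_gal :: "'a::field set \<Rightarrow> ('a \<Rightarrow> 'a) set" where
  "abs_gal K = {\<sigma>. bij \<sigma> \<and> (\<forall>x y. \<sigma> (x + y) = \<sigma> x + \<sigma> y \<and> \<sigma> (x * y) = \<sigma> x * \<sigma> y)
                  \<and> \<sigma> 1 = 1 \<and> (\<forall>x\<in>K. \<sigma> x = x)}"

definition gal_cyc :: "'a::field set \<Rightarrow> nat \<Rightarrow> ('a \<Rightarrow> 'a) set" where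
  "gal_cyc K n = {g. g \<in> extensional (cyc K n) \<and> bij_betw g (cyc K n) (cyc K n) \<and>
      (\<forall>x\<in>cyc K n. \<forall>y\<in>cyc K n. g (x + y) = g x + g y \<and> g (x * y) = g x * g y)
      \<and> g 1 = 1 \<and> (\<forall>x\<in>K. g x = x)}"

definition gal_cyc_comp :: "'a::field set \<Rightarrow> nat \<Rightarrow> ('a \<Rightarrow> 'a) \<Rightarrow> ('a \<Rightarrow> 'a) \<Rightarrow> ('a \<Rightarrow> 'a)" where
  "gal_cyc_comp K n g h = restrict (g \<circ> h) (cyc K n)"

definition cocycle :: "('g \<Rightarrow> 'g \<Rightarrow> 'g) \<Rightarrow> 'g set \<Rightarrow> ('g \<Rightarrow> 'a \<Rightarrow> 'a)
     \<Rightarrow> 'a::field set \<Rightarrow> ('g \<Rightarrow> 'a) \<Rightarrow> bool" where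
  "cocycle gop G act M a \<longleftrightarrow> (\<forall>\<sigma>\<in>G. a \<sigma> \<in> M) \<and>
     (\<forall>\<sigma>\<in>G. \<forall>\<tau>\<in>G. a (gop \<sigma> \<tau>) = a \<sigma> * act \<sigma> (a \<tau>))"

definition cohomologous :: "'g set \<Rightarrow> ('g \<Rightarrow> 'a \<Rightarrow> 'a) \<Rightarrow> 'a::field set
     \<Rightarrow> ('g \<Rightarrow> 'a) \<Rightarrow> ('g \<Rightarrow> 'a) \<Rightarrow> bool" where
  "cohomologous G act M a c \<longleftrightarrow> (\<exists>b\<in>M. \<forall>\<sigma>\<in>G. a \<sigma> = c \<sigma> * (act \<sigma> b / b))"

text \<open>Continuous cocycles of the absolute Galois group (Krull topology, discrete module):
  locally constant, i.e. depending only on the restriction to some finite set\<close>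
definition cont_cocycle :: "'a::field set \<Rightarrow> 'a set \<Rightarrow> (('a \<Rightarrow> 'a) \<Rightarrow> 'a) \<Rightarrow> bool" where
  "cont_cocycle K M a \<longleftrightarrow> cocycle (\<circ>) (abs_gal K) (\<lambda>\<sigma>. \<sigma>) M a \<and>
     (\<exists>S. finite S \<and> (\<forall>\<sigma>\<in>abs_gal K. \<forall>\<tau>\<in>abs_gal K. (\<forall>x\<in>S. \<sigma> x = \<tau> x) \<longrightarrow> a \<sigma> = a \<tau>))"

definition inflate :: "'a::field set \<Rightarrow> nat \<Rightarrow> (('a \<Rightarrow> 'a) \<Rightarrow> 'a) \<Rightarrow> (('a \<Rightarrow> 'a) \<Rightarrow> 'a)" where
  "inflate K n f = (\<lambda>\<sigma>. f (restrict \<sigma> (cyc K n)))"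

definition CB_prop :: "'a::field set \<Rightarrow> nat \<Rightarrow> bool" where
  "CB_prop K L \<longleftrightarrow> (\<forall>n>0. \<forall>x\<in>K - {0}.
      (\<exists>y\<in>cyc K (L * n) - {0}. x = y ^ (L * n)) \<longrightarrow> (\<exists>z\<in>K - {0}. x = z ^ n))"

definition prop_i :: "'a::field set \<Rightarrow> nat \<Rightarrow> bool" where
  "prop_i K L \<longleftrightarrow> (\<forall>n>0. \<forall>f. cocycle (gal_cyc_comp K (L * n)) (gal_cyc K (L * n)) (\<lambda>g. g)
         (mu (L * n)) f \<longrightarrow>
       (\<exists>c. cont_cocycle K (mu L) c \<and>
          cohomologous (abs_gal K) (\<lambda>\<sigma>. \<sigma>) (mu (L * n)) (inflate K (L * n) f) c))"

definition prop_ii :: "'a::field set \<Rightarrow> nat \<Rightarrow> bool" where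
  "prop_ii K L \<longleftrightarrow> (\<forall>n>0. \<forall>f. cocycle (gal_cyc_comp K (L * n)) (gal_cyc K (L * n)) (\<lambda>g. g)
         (mu (L * n)) f \<longrightarrow>
       (\<exists>c. cocycle (gal_cyc_comp K (L * n)) (gal_cyc K (L * n)) (\<lambda>g. g) (mu L) c \<and>
          cohomologous (gal_cyc K (L * n)) (\<lambda>g. g) (mu (L * n)) f c))"

definition finite_over_Q :: "'a::field_char_0 set \<Rightarrow> bool" where
  "finite_over_Q F \<longleftrightarrow> (\<exists>B. finite B \<and> B \<subseteq> F \<and>
      (\<forall>x\<in>F. \<exists>c. x = (\<Sum>b\<in>B. of_rat (c b) * b)))"

definition embedding_on :: "'a::field set \<Rightarrow> ('a \<Rightarrow> 'a) \<Rightarrow> bool" where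
  "embedding_on F \<phi> \<longleftrightarrow> (\<forall>x\<in>F. \<forall>y\<in>F. \<phi> (x + y) = \<phi> x + \<phi> y \<and> \<phi> (x * y) = \<phi> x * \<phi> y)
      \<and> \<phi> 1 = 1"

text \<open>F is a finite abelian (Galois) extension of \<Q> (char 0, so separable):
  normal (every embedding maps F into F) with commutative automorphism group\<close>
definition abelian_over_Q :: "'a::field_char_0 set \<Rightarrow> bool" where
  "abelian_over_Q F \<longleftrightarrow> is_subfield F \<and> finite_over_Q F \<and>
     (\<forall>\<phi>. embedding_on F \<phi> \<longrightarrow> \<phi> ` F \<subseteq> F) \<and>
     (\<forall>\<phi> \<psi>. embedding_on F \<phi> \<and> embedding_on F \<psi> \<longrightarrow> (\<forall>x\<in>F. \<phi> (\<psi> x) = \<psi> (\<phi> x)))"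

definition K_ab :: "'a::field_char_0 set \<Rightarrow> 'a set" where
  "K_ab K = field_gen (\<Union>{F. F \<subseteq> K \<and> abelian_over_Q F})"

definition is_least_pos :: "(nat \<Rightarrow> bool) \<Rightarrow> nat \<Rightarrow> bool" where
  "is_least_pos P L \<longleftrightarrow> L > 0 \<and> P L \<and> (\<forall>L'. L' > 0 \<and> P L' \<longrightarrow> L \<le> L')"

end

theory Submission
  imports Defs
begin


definition polyin :: "'a::comm_ring_1 set \<Rightarrow> 'a poly \<Rightarrow> bool" where
  "polyin R p \<longleftrightarrow> (\<forall>i. coeff p i \<in> R)"

definition is_subring :: "'a::comm_ring_1 set \<Rightarrow> bool" where
  "is_subring R \<longleftrightarrow> 0 \<in> R \<and> 1 \<in> R \<and> (\<forall>x\<in>R. \<forall>y\<in>R. x + y \<in> R \<and> x - y \<in> R \<and> x * y \<in> R)"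

lemma subfield_subring: "is_subfield F \<Longrightarrow> is_subring F"
  unfolding is_subfield_def is_subring_def by blast

lemma sr0: "is_subring R \<Longrightarrow> 0 \<in> R" and sr1: "is_subring R \<Longrightarrow> 1 \<in> R"
  unfolding is_subring_def by auto
lemma sr_add: "is_subring R \<Longrightarrow> x \<in> R \<Longrightarrow> y \<in> R \<Longrightarrow> x + y \<in> R"
  unfolding is_subring_def by auto
lemma sr_diff: "is_subring R \<Longrightarrow> x \<in> R \<Longrightarrow> y \<in> R \<Longrightarrow> x - y \<in> R"
  unfolding is_subring_def by auto
lemma sr_mult: "is_subring R \<Longrightarrow> x \<in> R \<Longrightarrow> y \<in> R \<Longrightarrow> x * y \<in> R"
  unfolding is_subring_def by auto
lemma sr_uminus: "is_subring R \<Longrightarrow> x \<in> R \<Longrightarrow> - x \<in> R"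
  using sr_diff[of R 0 x] sr0[of R] by simp
lemma sr_pow: "is_subring R \<Longrightarrow> x \<in> R \<Longrightarrow> x ^ n \<in> R"
  by (induction n) (auto intro: sr_mult sr1)
lemma sr_of_nat: "is_subring R \<Longrightarrow> of_nat n \<in> R"
  by (induction n) (auto intro: sr_add sr1 sr0)
lemma sr_sum: "is_subring R \<Longrightarrow> (\<And>i. i \<in> A \<Longrightarrow> f i \<in> R) \<Longrightarrow> sum f A \<in> R"
  by (induction A rule: infinite_finite_induct) (auto intro: sr_add sr0)
lemma sr_prod: "is_subring R \<Longrightarrow> (\<And>i. i \<in> A \<Longrightarrow> f i \<in> R) \<Longrightarrow> prod f A \<in> R"
  by (induction A rule: infinite_finite_induct) (auto intro: sr_mult sr1)

lemma sf_inverse: "is_subfield F \<Longrightarrow> x \<in> F \<Longrightarrow> inverse x \<in> F"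
  unfolding is_subfield_def by auto
lemma sf_divide: "is_subfield F \<Longrightarrow> x \<in> F \<Longrightarrow> y \<in> F \<Longrightarrow> (x::'a::field) / y \<in> F"
  using sf_inverse[of F y] sr_mult[OF subfield_subring, of F x "inverse y"]
  by (simp add: divide_inverse)

lemma polyin_0[simp]: "is_subring R \<Longrightarrow> polyin R 0"
  unfolding polyin_def by (simp add: sr0)
lemma polyin_const: "is_subring R \<Longrightarrow> a \<in> R \<Longrightarrow> polyin R [:a:]"
  unfolding polyin_def by (auto simp: coeff_pCons split: nat.split intro: sr0)
lemma polyin_pCons: "is_subring R \<Longrightarrow> polyin R (pCons a p) \<longleftrightarrow> a \<in> R \<and> polyin R p"
  unfolding polyin_def by (auto simp: coeff_pCons split: nat.split)
lemma polyin_X: "is_subring R \<Longrightarrow> polyin R [:0,1:]"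
  by (simp add: polyin_pCons polyin_const sr0 sr1)
lemma polyin_add: "is_subring R \<Longrightarrow> polyin R p \<Longrightarrow> polyin R q \<Longrightarrow> polyin R (p + q)"
  unfolding polyin_def by (auto intro: sr_add)
lemma polyin_diff: "is_subring R \<Longrightarrow> polyin R p \<Longrightarrow> polyin R q \<Longrightarrow> polyin R (p - q)"
  unfolding polyin_def by (auto intro: sr_diff)
lemma polyin_mult: "is_subring R \<Longrightarrow> polyin R p \<Longrightarrow> polyin R q \<Longrightarrow> polyin R (p * q)"
  unfolding polyin_def coeff_mult by (auto intro!: sr_sum sr_mult)
lemma polyin_smult: "is_subring R \<Longrightarrow> a \<in> R \<Longrightarrow> polyin R p \<Longrightarrow> polyin R (smult a p)"
  unfolding polyin_def by (auto intro: sr_mult)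
lemma polyin_monom: "is_subring R \<Longrightarrow> a \<in> R \<Longrightarrow> polyin R (monom a n)"
  unfolding polyin_def by (auto simp: coeff_monom intro: sr0)
lemma polyin_pderiv: "is_subring R \<Longrightarrow> polyin R p \<Longrightarrow> polyin R (pderiv p)"
  unfolding polyin_def coeff_pderiv by (metis sr_mult sr_of_nat)
lemma polyin_mono: "R \<subseteq> S \<Longrightarrow> polyin R p \<Longrightarrow> polyin S p"
  unfolding polyin_def by auto
lemma poly_in: "is_subring R \<Longrightarrow> polyin R p \<Longrightarrow> x \<in> R \<Longrightarrow> poly p x \<in> R"
proof (induction p)
  case (pCons a p)
  then show ?case by (simp add: polyin_pCons sr_add sr_mult)
qed (simp add: sr0)

lemma subring_alg_inverse:
  fixes K T :: "'a::field set"
  assumes T: "is_subring T" and KT: "K \<subseteq> T" and K: "is_subfield K"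
    and alg: "algebraic_over K x" and xT: "x \<in> T"
  shows "inverse x \<in> T"
proof (cases "x = 0")
  case True then show ?thesis using sr0[OF T] by simp
next
  case False
  have sK: "is_subring K" using K subfield_subring by blast
  let ?P = "\<lambda>p. p \<noteq> 0 \<and> polyin K p \<and> poly p x = 0"
  from alg have "\<exists>p. ?P p" unfolding algebraic_over_def polyin_def by blast
  then obtain p where Pp: "?P p" and min: "\<forall>q. ?P q \<longrightarrow> degree p \<le> degree q"
    using ex_has_least_nat[of ?P _ degree] by blast
  obtain a p1 where pp: "p = pCons a p1" by (cases p)
  have a: "a \<in> K" and p1: "polyin K p1" using Pp pp polyin_pCons[OF sK] by auto
  have eq: "a + x * poly p1 x = 0" using Pp pp by simp
  have "a \<noteq> 0"
  proof
    assume a0: "a = 0"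
    then have p1nz: "p1 \<noteq> 0" using Pp pp by auto
    have "poly p1 x = 0" using eq a0 False by simp
    then have "?P p1" using p1nz p1 by blast
    then have "degree p \<le> degree p1" using min by blast
    moreover have "degree p = Suc (degree p1)" using pp p1nz by simp
    ultimately show False by simp
  qed
  then have "inverse x = - (inverse a * poly p1 x)"
    using eq False by (simp add: field_simps eq_neg_iff_add_eq_0)
  moreover have "inverse a * poly p1 x \<in> T"
    using sf_inverse[OF K a] KT poly_in[OF T polyin_mono[OF KT p1] xT] sr_mult[OF T] by blast
  ultimately show ?thesis using sr_uminus[OF T] by simp
qed

lemma subring_alg_subfield:
  fixes K T :: "'a::field set"
  assumes T: "is_subring T" and KT: "K \<subseteq> T" and K: "is_subfield K"
    and alg: "\<forall>x. algebraic_over K x"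
  shows "is_subfield T"
  using T subring_alg_inverse[OF T KT K] alg unfolding is_subfield_def is_subring_def by blast



lemma polyin_divmod:
  fixes p q :: "'a::field poly"
  assumes R: "is_subring R" and p: "polyin R p" and mon: "lead_coeff p = 1" and q: "polyin R q"
  shows "\<exists>s r. polyin R s \<and> polyin R r \<and> q = s * p + r \<and> (r = 0 \<or> degree r < degree p)"
  using q
proof (induction "degree q" arbitrary: q rule: less_induct)
  case less
  show ?case
  proof (cases "q = 0 \<or> degree q < degree p")
    case True
    then have "q = 0 * p + q" "q = 0 \<or> degree q < degree p" by simp_all
    then show ?thesis using less.prems polyin_0[OF R] by (intro exI[of _ 0] exI[of _ q] conjI)
  next
    case False
    then have qnz: "q \<noteq> 0" and dqp: "degree p \<le> degree q" by auto
    have pnz: "p \<noteq> 0" using mon by auto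
    define t where "t = monom (lead_coeff q) (degree q - degree p)"
    define q' where "q' = q - t * p"
    have "lead_coeff q \<noteq> 0" using qnz by simp
    then have tnz: "t \<noteq> 0" unfolding t_def by (simp only: monom_eq_0_iff) simp
    have dtm: "degree t = degree q - degree p" using \<open>lead_coeff q \<noteq> 0\<close> unfolding t_def by (rule degree_monom_eq)
    have dt: "degree (t * p) = degree q"
      using degree_mult_eq[OF tnz pnz] dqp dtm by simp
    have lt: "lead_coeff (t * p) = lead_coeff q"
      using mon by (simp only: lead_coeff_mult t_def lead_coeff_monom mult_1_right)
    have "lead_coeff q \<in> R" using less.prems unfolding polyin_def by blast
    then have tin: "polyin R t" unfolding t_def by (rule polyin_monom[OF R])
    have q'in: "polyin R q'" unfolding q'_def using polyin_diff[OF R less.prems polyin_mult[OF R tin p]] .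
    have cq': "coeff q' (degree q) = 0" unfolding q'_def using lt dt by simp
    have dq': "degree q' \<le> degree q" unfolding q'_def by (rule degree_diff_le) (simp_all add: dt)
    show ?thesis
    proof (cases "q' = 0")
      case True
      then have "q = t * p + 0" by (simp add: q'_def)
      then show ?thesis using tin polyin_0[OF R] by (intro exI[of _ t] exI[of _ 0] conjI) simp_all
    next
      case False
      then have "degree q' \<noteq> degree q" using cq' by (metis leading_coeff_0_iff)
      then have "degree q' < degree q" using dq' by simp
      from less.hyps[OF this q'in] obtain s r where
        sr: "polyin R s" "polyin R r" "q' = s * p + r" "r = 0 \<or> degree r < degree p" by blast
      have "q = q' + t * p" unfolding q'_def by simp
      also have "\<dots> = (s + t) * p + r" using sr(3) by (simp add: distrib_right)
      finally have "q = (s + t) * p + r" .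
      then show ?thesis using sr polyin_add[OF R sr(1) tin] by (intro exI[of _ "s + t"] exI[of _ r] conjI) simp_all
    qed
  qed
qed

lemma polyin_monic_of:
  fixes p :: "'a::field poly"
  assumes F: "is_subfield F" and p: "polyin F p" and pnz: "p \<noteq> 0"
  shows "polyin F (smult (inverse (lead_coeff p)) p) \<and> lead_coeff (smult (inverse (lead_coeff p)) p) = 1
     \<and> degree (smult (inverse (lead_coeff p)) p) = degree p"
proof -
  have "lead_coeff p \<in> F" using p polyin_def by blast
  then have "inverse (lead_coeff p) \<in> F" using sf_inverse[OF F] by blast
  then show ?thesis using polyin_smult[OF subfield_subring[OF F] _ p] pnz by simp
qed

definition is_minpoly :: "'a::field set \<Rightarrow> 'a \<Rightarrow> 'a poly \<Rightarrow> bool" where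
  "is_minpoly R y p \<longleftrightarrow> polyin R p \<and> lead_coeff p = 1 \<and> poly p y = 0 \<and>
     (\<forall>q. polyin R q \<and> poly q y = 0 \<longrightarrow> (\<exists>s. polyin R s \<and> q = s * p))"

lemma minpoly_exists:
  fixes K R :: "'a::field set"
  assumes R: "is_subfield R" and KR: "K \<subseteq> R" and K: "is_subfield K" and alg: "algebraic_over K y"
  shows "\<exists>p. is_minpoly R y p"
proof -
  let ?P = "\<lambda>p. polyin R p \<and> lead_coeff p = 1 \<and> poly p y = 0"
  from alg obtain p0 where p0: "p0 \<noteq> 0" "polyin K p0" "poly p0 y = 0"
    unfolding algebraic_over_def polyin_def by blast
  have "?P (smult (inverse (lead_coeff p0)) p0)"
    using polyin_monic_of[OF K p0(2) p0(1)] polyin_mono[OF KR] p0(3) by auto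
  then obtain p where Pp: "?P p" and min: "\<forall>q. ?P q \<longrightarrow> degree p \<le> degree q"
    using ex_has_least_nat[of ?P _ degree] by blast
  have "\<exists>s. polyin R s \<and> q = s * p" if q: "polyin R q" "poly q y = 0" for q
  proof -
    obtain s r where sr: "polyin R s" "polyin R r" "q = s * p + r" "r = 0 \<or> degree r < degree p"
      using polyin_divmod[OF subfield_subring[OF R], of p q] Pp q by blast
    have ry: "poly r y = 0" using sr(3) q(2) Pp by simp
    have "r = 0"
    proof (rule ccontr)
      assume rnz: "r \<noteq> 0"
      then have "?P (smult (inverse (lead_coeff r)) r)"
        using polyin_monic_of[OF R sr(2) rnz] ry by simp
      then have "degree p \<le> degree (smult (inverse (lead_coeff r)) r)" using min by blast
      then have "degree p \<le> degree r" using polyin_monic_of[OF R sr(2) rnz] by simp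
      then show False using sr(4) rnz by simp
    qed
    then show ?thesis using sr by auto
  qed
  then show ?thesis using Pp unfolding is_minpoly_def by blast
qed

lemma minpoly_degree: "is_minpoly R y p \<Longrightarrow> degree p \<ge> 1"
proof (rule ccontr)
  assume m: "is_minpoly R y p" and "\<not> degree p \<ge> 1"
  then have "degree p = 0" by simp
  then obtain c where "p = [:c:]" by (metis degree_eq_zeroE)
  then show False using m unfolding is_minpoly_def by auto
qed

definition hom_on :: "'a::field set \<Rightarrow> ('a \<Rightarrow> 'a) \<Rightarrow> bool" where
  "hom_on R \<phi> \<longleftrightarrow> \<phi> 1 = 1 \<and> (\<forall>x\<in>R. \<forall>y\<in>R. \<phi> (x + y) = \<phi> x + \<phi> y \<and> \<phi> (x * y) = \<phi> x * \<phi> y)"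

context
  fixes R :: "'a::field set" and \<phi> :: "'a \<Rightarrow> 'a"
  assumes R: "is_subring R" and h: "hom_on R \<phi>"
begin

lemma hom_add: "x \<in> R \<Longrightarrow> y \<in> R \<Longrightarrow> \<phi> (x + y) = \<phi> x + \<phi> y"
  using h unfolding hom_on_def by blast
lemma hom_mult: "x \<in> R \<Longrightarrow> y \<in> R \<Longrightarrow> \<phi> (x * y) = \<phi> x * \<phi> y"
  using h unfolding hom_on_def by blast
lemma hom_1: "\<phi> 1 = 1" using h unfolding hom_on_def by blast
lemma hom_0: "\<phi> 0 = 0"
  using hom_add[OF sr0[OF R] sr0[OF R]] by (metis add_cancel_right_right add_0)
lemma hom_diff: "x \<in> R \<Longrightarrow> y \<in> R \<Longrightarrow> \<phi> (x - y) = \<phi> x - \<phi> y"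
  using hom_add[OF sr_diff[OF R] , of x y y] by (simp add: algebra_simps)
lemma hom_sum: "(\<And>i. i \<in> A \<Longrightarrow> f i \<in> R) \<Longrightarrow> \<phi> (sum f A) = (\<Sum>i\<in>A. \<phi> (f i))"
proof (induction A rule: infinite_finite_induct)
  case (insert x F)
  then show ?case using hom_add[of "f x" "sum f F"] sr_sum[OF R, of F f] by auto
qed (auto simp: hom_0)

lemma map_add: "polyin R p \<Longrightarrow> polyin R q \<Longrightarrow> map_poly \<phi> (p + q) = map_poly \<phi> p + map_poly \<phi> q"
  by (intro poly_eqI) (simp add: coeff_map_poly hom_0 hom_add polyin_def)
lemma map_diff: "polyin R p \<Longrightarrow> polyin R q \<Longrightarrow> map_poly \<phi> (p - q) = map_poly \<phi> p - map_poly \<phi> q"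
  by (intro poly_eqI) (simp add: coeff_map_poly hom_0 hom_diff polyin_def)
lemma map_mult: "polyin R p \<Longrightarrow> polyin R q \<Longrightarrow> map_poly \<phi> (p * q) = map_poly \<phi> p * map_poly \<phi> q"
  by (intro poly_eqI) (simp add: coeff_map_poly hom_0 coeff_mult hom_sum polyin_def sr_mult[OF R] hom_mult)
lemma map_const: "map_poly \<phi> [:a:] = [:\<phi> a:]"
  by (simp add: map_poly_pCons hom_0)
lemma map_X: "map_poly \<phi> [:0,1:] = [:0,1:]"
  by (simp add: map_poly_pCons hom_0 hom_1)
lemma map_monic_degree: "polyin R p \<Longrightarrow> lead_coeff p = 1 \<Longrightarrow> degree (map_poly \<phi> p) = degree p"
proof -
  assume "lead_coeff p = 1"
  then have "coeff (map_poly \<phi> p) (degree p) = 1" by (simp add: coeff_map_poly hom_0 hom_1)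
  then have "degree p \<le> degree (map_poly \<phi> p)" by (simp add: le_degree)
  moreover have "degree (map_poly \<phi> p) \<le> degree p" by (rule map_poly_degree_leq)
  ultimately show ?thesis by simp
qed

end



definition emb_graph :: "'a::field set \<Rightarrow> ('a \<times> 'a) set \<Rightarrow> bool" where
  "emb_graph K G \<longleftrightarrow> single_valued G \<and> is_subfield (Domain G) \<and> (\<forall>x\<in>K. (x, x) \<in> G) \<and>
     (\<forall>x a y b. (x, a) \<in> G \<longrightarrow> (y, b) \<in> G \<longrightarrow> (x + y, a + b) \<in> G \<and> (x * y, a * b) \<in> G)"

definition gf :: "('a \<times> 'a) set \<Rightarrow> 'a \<Rightarrow> 'a" where
  "gf G x = (THE y. (x, y) \<in> G)"

lemma gf_eq: "single_valued G \<Longrightarrow> (x, a) \<in> G \<Longrightarrow> gf G x = a"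
  unfolding gf_def single_valued_def by blast

lemma gf_in: "single_valued G \<Longrightarrow> x \<in> Domain G \<Longrightarrow> (x, gf G x) \<in> G"
  using gf_eq by fastforce

lemma emb_graph_hom:
  assumes K: "is_subfield K" and G: "emb_graph K G"
  shows "hom_on (Domain G) (gf G)"
proof -
  have sv: "single_valued G" using G emb_graph_def by blast
  have "(1, 1) \<in> G" using G K unfolding emb_graph_def is_subfield_def by blast
  then have "gf G 1 = 1" using gf_eq[OF sv] by blast
  moreover have "gf G (x + y) = gf G x + gf G y \<and> gf G (x * y) = gf G x * gf G y"
    if "x \<in> Domain G" "y \<in> Domain G" for x y
  proof -
    have "(x, gf G x) \<in> G" "(y, gf G y) \<in> G" using gf_in[OF sv] that by auto
    then have "(x + y, gf G x + gf G y) \<in> G" "(x * y, gf G x * gf G y) \<in> G"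
      using G unfolding emb_graph_def by blast+
    then show ?thesis using gf_eq[OF sv] by blast
  qed
  ultimately show ?thesis unfolding hom_on_def by blast
qed

lemma ext_step:
  fixes K :: "'a::field set"
  assumes K: "is_subfield K" and alg: "\<forall>x. algebraic_over K x" and G: "emb_graph K G"
    and mp: "is_minpoly (Domain G) y p" and root: "poly (map_poly (gf G) p) y' = 0"
  shows "\<exists>G'. emb_graph K G' \<and> G \<subseteq> G' \<and> (y, y') \<in> G'"
proof -
  define D where "D = Domain G"
  define \<phi> where "\<phi> = gf G"
  have sv: "single_valued G" using G emb_graph_def by blast
  have Df: "is_subfield D" using G emb_graph_def D_def by blast
  have D: "is_subring D" using subfield_subring[OF Df] .
  have h: "hom_on D \<phi>" using emb_graph_hom[OF K G] D_def \<phi>_def by simp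
  have KD: "K \<subseteq> D" using G unfolding emb_graph_def D_def by blast
  have p: "polyin D p" and pmon: "lead_coeff p = 1" and py: "poly p y = 0"
    and pdvd: "\<And>q. polyin D q \<Longrightarrow> poly q y = 0 \<Longrightarrow> \<exists>s. polyin D s \<and> q = s * p"
    using mp unfolding is_minpoly_def D_def by blast+
  have key: "poly (map_poly \<phi> q1) y' = poly (map_poly \<phi> q2) y'"
    if q1: "polyin D q1" and q2: "polyin D q2" and e: "poly q1 y = poly q2 y" for q1 q2
  proof -
    have d: "polyin D (q1 - q2)" using polyin_diff[OF D q1 q2] .
    have "poly (q1 - q2) y = 0" using e by simp
    then obtain s where s: "polyin D s" "q1 - q2 = s * p" using pdvd[OF d] by blast
    have "map_poly \<phi> q1 - map_poly \<phi> q2 = map_poly \<phi> (q1 - q2)"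
      using map_diff[OF D h q1 q2] by simp
    also have "\<dots> = map_poly \<phi> s * map_poly \<phi> p" using s map_mult[OF D h s(1) p] by simp
    finally have "poly (map_poly \<phi> q1) y' - poly (map_poly \<phi> q2) y' = 0"
      using root \<phi>_def by (metis poly_diff poly_mult mult_zero_right)
    then show ?thesis by simp
  qed
  define G' where "G' = {(poly q y, poly (map_poly \<phi> q) y') | q. polyin D q}"
  have sv': "single_valued G'"
  proof (rule single_valuedI)
    fix x a b assume "(x, a) \<in> G'" "(x, b) \<in> G'"
    then obtain q1 q2 where "polyin D q1" "x = poly q1 y" "a = poly (map_poly \<phi> q1) y'"
      "polyin D q2" "x = poly q2 y" "b = poly (map_poly \<phi> q2) y'" unfolding G'_def by blast
    then show "a = b" using key by metis
  qed
  have DG': "Domain G' = {poly q y | q. polyin D q}" unfolding G'_def by auto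
  have sr': "is_subring (Domain G')"
    unfolding DG' is_subring_def
  proof (intro conjI ballI)
    show "0 \<in> {poly q y |q. polyin D q}" using polyin_0[OF D] by (metis (mono_tags) mem_Collect_eq poly_0)
    show "1 \<in> {poly q y |q. polyin D q}" using polyin_const[OF D sr1[OF D]]
      by (metis (mono_tags) mem_Collect_eq one_pCons poly_1)
    fix a b assume a: "a \<in> {poly q y |q. polyin D q}" and b: "b \<in> {poly q y |q. polyin D q}"
    then obtain qa qb where qa: "polyin D qa" "a = poly qa y" and qb: "polyin D qb" "b = poly qb y" by blast
    show "a + b \<in> {poly q y |q. polyin D q}" using polyin_add[OF D qa(1) qb(1)] qa qb
      by (metis (mono_tags) mem_Collect_eq poly_add)
    show "a - b \<in> {poly q y |q. polyin D q}" using polyin_diff[OF D qa(1) qb(1)] qa qb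
      by (metis (mono_tags) mem_Collect_eq poly_diff)
    show "a * b \<in> {poly q y |q. polyin D q}" using polyin_mult[OF D qa(1) qb(1)] qa qb
      by (metis (mono_tags) mem_Collect_eq poly_mult)
  qed
  have constin: "(x, \<phi> x) \<in> G'" if "x \<in> D" for x
  proof -
    have "polyin D [:x:]" using polyin_const[OF D that] .
    moreover have "poly (map_poly \<phi> [:x:]) y' = \<phi> x" using map_const[OF D h] by simp
    moreover have "poly [:x:] y = x" by simp
    ultimately show ?thesis unfolding G'_def by (metis (mono_tags, lifting) mem_Collect_eq)
  qed
  have DD': "D \<subseteq> Domain G'" using constin by blast
  have sf': "is_subfield (Domain G')"
    using subring_alg_subfield[OF sr' _ K alg] KD DD' by blast
  have Kfix: "\<forall>x\<in>K. (x, x) \<in> G'"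
  proof
    fix x assume "x \<in> K"
    then have "(x, x) \<in> G" using G emb_graph_def by blast
    then have "\<phi> x = x" "x \<in> D" using gf_eq[OF sv] \<phi>_def D_def by auto
    then show "(x, x) \<in> G'" using constin by metis
  qed
  have hom': "(x + z, a + b) \<in> G' \<and> (x * z, a * b) \<in> G'" if xa: "(x, a) \<in> G'" and zb: "(z, b) \<in> G'" for x a z b
  proof -
    obtain q1 where q1: "polyin D q1" "x = poly q1 y" "a = poly (map_poly \<phi> q1) y'"
      using xa unfolding G'_def by blast
    obtain q2 where q2: "polyin D q2" "z = poly q2 y" "b = poly (map_poly \<phi> q2) y'"
      using zb unfolding G'_def by blast
    have "(poly (q1 + q2) y, poly (map_poly \<phi> (q1 + q2)) y') \<in> G'"
      unfolding G'_def using polyin_add[OF D q1(1) q2(1)] by blast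
    moreover have "(poly (q1 * q2) y, poly (map_poly \<phi> (q1 * q2)) y') \<in> G'"
      unfolding G'_def using polyin_mult[OF D q1(1) q2(1)] by blast
    ultimately show ?thesis
      using map_add[OF D h q1(1) q2(1)] map_mult[OF D h q1(1) q2(1)] q1 q2 by simp
  qed
  have emb': "emb_graph K G'" unfolding emb_graph_def using sv' sf' Kfix hom' by blast
  have sub: "G \<subseteq> G'"
  proof
    fix xa assume "xa \<in> G"
    then obtain x a where xa: "xa = (x, a)" "(x, a) \<in> G" by (cases xa) auto
    then have "x \<in> D" "\<phi> x = a" using gf_eq[OF sv] D_def \<phi>_def by auto
    then show "xa \<in> G'" using constin xa by metis
  qed
  have "(y, y') \<in> G'"
  proof -
    have "polyin D [:0,1:]" using polyin_X[OF D] .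
    moreover have "poly (map_poly \<phi> [:0,1:]) y' = y'" using map_X[OF D h] by simp
    moreover have "poly [:0,1:] y = y" by simp
    ultimately show ?thesis unfolding G'_def by (metis (mono_tags, lifting) mem_Collect_eq)
  qed
  then show ?thesis using emb' sub by blast
qed



lemma emb_sv: "emb_graph K G \<Longrightarrow> single_valued G" unfolding emb_graph_def by blast
lemma emb_sf: "emb_graph K G \<Longrightarrow> is_subfield (Domain G)" unfolding emb_graph_def by blast
lemma emb_K: "emb_graph K G \<Longrightarrow> x \<in> K \<Longrightarrow> (x, x) \<in> G" unfolding emb_graph_def by blast
lemma emb_add: "emb_graph K G \<Longrightarrow> (x, a) \<in> G \<Longrightarrow> (y, b) \<in> G \<Longrightarrow> (x + y, a + b) \<in> G"
  unfolding emb_graph_def by blast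
lemma emb_mult: "emb_graph K G \<Longrightarrow> (x, a) \<in> G \<Longrightarrow> (y, b) \<in> G \<Longrightarrow> (x * y, a * b) \<in> G"
  unfolding emb_graph_def by blast

lemma chain_union_emb:
  fixes K :: "'a::field set"
  assumes C: "C \<noteq> {}" "\<forall>G\<in>C. emb_graph K G" and ch: "chain\<^sub>\<subseteq> C"
  shows "emb_graph K (\<Union>C)"
proof -
  have two: "\<exists>G\<in>C. (x, a) \<in> G \<and> (y, b) \<in> G" if xa: "(x, a) \<in> \<Union>C" and yb: "(y, b) \<in> \<Union>C" for x a y b
  proof -
    obtain G1 G2 where "G1 \<in> C" "G2 \<in> C" "(x, a) \<in> G1" "(y, b) \<in> G2" using xa yb by blast
    then show ?thesis using ch unfolding chain_subset_def by blast
  qed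
  have sv: "single_valued (\<Union>C)"
  proof (rule single_valuedI)
    fix x a b assume "(x, a) \<in> \<Union>C" "(x, b) \<in> \<Union>C"
    then obtain G where "G \<in> C" "(x, a) \<in> G" "(x, b) \<in> G" using two by blast
    moreover have "single_valued G" using C(2) \<open>G \<in> C\<close> emb_sv by blast
    ultimately show "a = b" by (meson single_valuedD)
  qed
  have twoD: "\<exists>G\<in>C. x \<in> Domain G \<and> y \<in> Domain G" if xD: "x \<in> Domain (\<Union>C)" and yD: "y \<in> Domain (\<Union>C)" for x y
  proof -
    obtain a b where "(x, a) \<in> \<Union>C" "(y, b) \<in> \<Union>C" using xD yD by (meson DomainE)
    from two[OF this] obtain G where "G \<in> C" "(x, a) \<in> G" "(y, b) \<in> G" by blast
    then show ?thesis by (meson DomainI)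
  qed
  have sf: "is_subfield (Domain (\<Union>C))"
    unfolding is_subfield_def
  proof (intro conjI ballI)
    obtain G where G: "G \<in> C" using C(1) by blast
    then have "is_subfield (Domain G)" using C(2) emb_sf by blast
    then show "0 \<in> Domain (\<Union>C)" "1 \<in> Domain (\<Union>C)" using G unfolding is_subfield_def by auto
  next
    fix x assume "x \<in> Domain (\<Union>C)"
    then obtain G where G: "G \<in> C" "x \<in> Domain G" by blast
    then have "is_subfield (Domain G)" using C(2) emb_sf by blast
    then have "inverse x \<in> Domain G" using G sf_inverse by blast
    then show "inverse x \<in> Domain (\<Union>C)" using G by blast
  next
    fix x y assume "x \<in> Domain (\<Union>C)" "y \<in> Domain (\<Union>C)"
    then obtain G where G: "G \<in> C" "x \<in> Domain G" "y \<in> Domain G" using twoD by blast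
    then have "is_subfield (Domain G)" using C(2) emb_sf by blast
    then have "x + y \<in> Domain G" "x - y \<in> Domain G" "x * y \<in> Domain G" using G unfolding is_subfield_def by auto
    then show "x + y \<in> Domain (\<Union>C)" "x - y \<in> Domain (\<Union>C)" "x * y \<in> Domain (\<Union>C)" using G by auto
  qed
  have Kf: "\<forall>x\<in>K. (x, x) \<in> \<Union>C"
  proof
    fix x assume "x \<in> K"
    obtain G where G: "G \<in> C" using C(1) by blast
    then show "(x, x) \<in> \<Union>C" using C(2) \<open>x \<in> K\<close> emb_K by blast
  qed
  have hom: "(x + y, a + b) \<in> \<Union>C \<and> (x * y, a * b) \<in> \<Union>C" if xa: "(x, a) \<in> \<Union>C" and yb: "(y, b) \<in> \<Union>C" for x a y b
  proof -
    obtain G where G: "G \<in> C" "(x, a) \<in> G" "(y, b) \<in> G" using two[OF xa yb] by blast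
    have e: "emb_graph K G" using C(2) G(1) by blast
    have "(x + y, a + b) \<in> G" "(x * y, a * b) \<in> G" using emb_add[OF e G(2,3)] emb_mult[OF e G(2,3)] by auto
    then show ?thesis using G(1) by blast
  qed
  show ?thesis unfolding emb_graph_def using sv sf Kf hom by (intro conjI allI impI) blast+
qed

lemma hom_poly_fix:
  fixes \<sigma> :: "'a::field \<Rightarrow> 'a"
  assumes h: "\<forall>x y. \<sigma> (x + y) = \<sigma> x + \<sigma> y \<and> \<sigma> (x * y) = \<sigma> x * \<sigma> y"
    and fx: "\<forall>x\<in>K. \<sigma> x = x" and p: "polyin K p"
  shows "\<sigma> (poly p z) = poly p (\<sigma> z)"
  using p
proof (induction p)
  case 0
  have "\<sigma> 0 = \<sigma> 0 + \<sigma> 0" using h by (metis add_0)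
  then show ?case by (metis poly_0 add_cancel_right_right)
next
  case (pCons a p)
  have "a \<in> K" "polyin K p" using pCons.prems unfolding polyin_def
    by (metis coeff_pCons_0, metis coeff_pCons_Suc)
  then show ?case using pCons.IH h fx by simp
qed

lemma extend_to_aut:
  fixes K :: "'a::{alg_closed_field, field_char_0} set"
  assumes K: "is_subfield K" and alg: "\<forall>x. algebraic_over K x" and G0: "emb_graph K G0"
  shows "\<exists>\<sigma>\<in>abs_gal K. \<forall>x a. (x, a) \<in> G0 \<longrightarrow> \<sigma> x = a"
proof -
  define A where "A = {G. emb_graph K G \<and> G0 \<subseteq> G}"
  have "\<forall>C\<in>chains A. \<exists>U\<in>A. \<forall>X\<in>C. X \<subseteq> U"
  proof
    fix C assume "C \<in> chains A"
    then have CA: "C \<subseteq> A" and ch: "chain\<^sub>\<subseteq> C" unfolding chains_def by auto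
    show "\<exists>U\<in>A. \<forall>X\<in>C. X \<subseteq> U"
    proof (cases "C = {}")
      case True
      then show ?thesis using G0 unfolding A_def by blast
    next
      case False
      have "emb_graph K (\<Union>C)" using chain_union_emb[OF False _ ch] CA unfolding A_def by blast
      moreover have "G0 \<subseteq> \<Union>C" using False CA unfolding A_def by blast
      ultimately show ?thesis unfolding A_def by blast
    qed
  qed
  from Zorn_Lemma2[OF this] obtain M where MA: "M \<in> A" and max: "\<forall>X\<in>A. M \<subseteq> X \<longrightarrow> X = M"
    by blast
  have M: "emb_graph K M" and G0M: "G0 \<subseteq> M" using MA A_def by auto
  have sv: "single_valued M" using M emb_graph_def by blast
  have KM: "K \<subseteq> Domain M" using M unfolding emb_graph_def by blast
  have sfM: "is_subfield (Domain M)" using M emb_graph_def by blast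
  have hM: "hom_on (Domain M) (gf M)" using emb_graph_hom[OF K M] .
  have allD: "y \<in> Domain M" for y
  proof (rule ccontr)
    assume ny: "y \<notin> Domain M"
    obtain p where mp: "is_minpoly (Domain M) y p"
      using minpoly_exists[OF sfM KM K] alg by blast
    have "degree (map_poly (gf M) p) = degree p"
      using map_monic_degree[OF subfield_subring[OF sfM] hM] mp unfolding is_minpoly_def by blast
    then have "degree (map_poly (gf M) p) > 0" using minpoly_degree[OF mp] by simp
    then obtain y' where "poly (map_poly (gf M) p) y' = 0" using alg_closed_imp_poly_has_root by blast
    from ext_step[OF K alg M mp this] obtain G' where "emb_graph K G'" "M \<subseteq> G'" "(y, y') \<in> G'"
      by blast
    moreover have "G' \<in> A" using \<open>emb_graph K G'\<close> \<open>M \<subseteq> G'\<close> G0M unfolding A_def by blast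
    ultimately have "G' = M" using max by blast
    then show False using ny \<open>(y, y') \<in> G'\<close> by blast
  qed
  define \<sigma> where "\<sigma> = gf M"
  have hom: "\<forall>x y. \<sigma> (x + y) = \<sigma> x + \<sigma> y \<and> \<sigma> (x * y) = \<sigma> x * \<sigma> y"
    using hM allD unfolding hom_on_def \<sigma>_def by blast
  have one: "\<sigma> 1 = 1" using hM unfolding hom_on_def \<sigma>_def by blast
  have fixK: "\<forall>x\<in>K. \<sigma> x = x" using M gf_eq[OF sv] unfolding emb_graph_def \<sigma>_def by blast
  have zero: "\<sigma> 0 = 0" using hom by (metis add_0 add_cancel_right_right)
  have sdiff: "\<sigma> (x - z) = \<sigma> x - \<sigma> z" for x z
    using hom by (metis eq_diff_eq)
  have nz: "\<sigma> w \<noteq> 0" if "w \<noteq> 0" for w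
  proof
    assume "\<sigma> w = 0"
    then have "\<sigma> (w * inverse w) = 0" using hom by simp
    then show False using that one by simp
  qed
  have inj: "inj \<sigma>"
  proof (rule injI)
    fix x z assume "\<sigma> x = \<sigma> z"
    then have "\<sigma> (x - z) = 0" using sdiff by simp
    then have "x - z = 0" using nz by blast
    then show "x = z" by simp
  qed
  have surj: "surj \<sigma>"
  proof -
    have "t \<in> range \<sigma>" for t
    proof -
      obtain p where p: "p \<noteq> 0" "polyin K p" "poly p t = 0"
        using alg unfolding algebraic_over_def polyin_def by blast
      define Z where "Z = {z. poly p z = 0}"
      have fin: "finite Z" unfolding Z_def using poly_roots_finite[OF p(1)] .
      have "\<sigma> ` Z \<subseteq> Z"
      proof
        fix w assume "w \<in> \<sigma> ` Z"
        then obtain z where "z \<in> Z" "w = \<sigma> z" by blast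
        then have "poly p w = \<sigma> (poly p z)" using hom_poly_fix[OF hom fixK p(2)] by simp
        then show "w \<in> Z" using \<open>z \<in> Z\<close> zero unfolding Z_def by simp
      qed
      then have "\<sigma> ` Z = Z" using endo_inj_surj[OF fin] inj inj_on_subset by blast
      then show ?thesis using p(3) unfolding Z_def by blast
    qed
    then show ?thesis by blast
  qed
  have "\<sigma> \<in> abs_gal K" unfolding abs_gal_def using inj surj hom one fixK bij_def by blast
  moreover have "\<forall>x a. (x, a) \<in> G0 \<longrightarrow> \<sigma> x = a" using G0M gf_eq[OF sv] \<sigma>_def by blast
  ultimately show ?thesis by blast
qed



lemma other_root:
  fixes K :: "'a::{alg_closed_field, field_char_0} set"
  assumes K: "is_subfield K" and mp: "is_minpoly K u p" and uK: "u \<notin> K"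
  shows "\<exists>v. poly p (v::'a) = 0 \<and> v \<noteq> u"
proof (rule ccontr)
  assume nov: "\<not> (\<exists>v. poly p v = 0 \<and> v \<noteq> u)"
  have sK: "is_subring K" using subfield_subring[OF K] .
  have p: "polyin K p" and pmon: "lead_coeff p = 1" and pu: "poly p u = 0"
    and pdvd: "\<And>q. polyin K q \<Longrightarrow> poly q u = 0 \<Longrightarrow> \<exists>s. polyin K s \<and> q = s * p"
    using mp unfolding is_minpoly_def by blast+
  have dp: "degree p \<ge> 1" using minpoly_degree[OF mp] .
  obtain r where pr: "p = [:-u, 1:] * r" using pu poly_eq_0_iff_dvd by (metis dvdE)
  have rnz: "r \<noteq> 0" using pr pmon by auto
  have "degree ([:-u, 1:] * r) = degree [:-u, 1:] + degree r" using rnz by (intro degree_mult_eq) auto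
  then have dpr: "degree p = Suc (degree r)" using pr by simp
  show False
  proof (cases "degree r = 0")
    case True
    then obtain c where rc: "r = [:c:]" by (metis degree_eq_zeroE)
    have "lead_coeff p = c" using pr rc by (simp add: lead_coeff_mult)
    then have "c = 1" using pmon by simp
    then have "coeff p 0 = - u" using pr rc by simp
    then have "- u \<in> K" using p unfolding polyin_def by metis
    then have "u \<in> K" using sr_uminus[OF sK] by fastforce
    then show False using uK by blast
  next
    case False
    then obtain v where rv: "poly r v = 0" using alg_closed_imp_poly_has_root by blast
    then have "poly p v = 0" using pr by simp
    then have vu: "v = u" using nov by blast
    then obtain s where rs: "r = [:-u, 1:] * s" using rv poly_eq_0_iff_dvd by (metis dvdE)
    have "poly (pderiv p) u = 0"
      unfolding pr rs pderiv_mult by simp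
    moreover have "polyin K (pderiv p)" using polyin_pderiv[OF sK p] .
    ultimately obtain s' where s': "polyin K s'" "pderiv p = s' * p" using pdvd by blast
    have "pderiv p \<noteq> 0" using dp pderiv_eq_0_iff[of p] by simp
    then have "s' \<noteq> 0" using s' by auto
    then have "degree (pderiv p) \<ge> degree p" using s' \<open>pderiv p \<noteq> 0\<close> pmon
      by (metis degree_mult_eq le_add2 mult_zero_right)
    moreover have "degree (pderiv p) = degree p - 1" by (rule degree_pderiv)
    ultimately show False using dp by simp
  qed
qed

lemma emb_Id_on:
  fixes K :: "'a::field set"
  assumes K: "is_subfield K"
  shows "emb_graph K (Id_on K)"
proof -
  have "single_valued (Id_on K)" by (simp add: single_valued_def Id_on_def)
  moreover have "Domain (Id_on K) = K" by auto
  moreover have "(x + y, a + b) \<in> Id_on K \<and> (x * y, a * b) \<in> Id_on K"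
    if "(x, a) \<in> Id_on K" "(y, b) \<in> Id_on K" for x a y b
    using that K unfolding is_subfield_def by auto
  ultimately show ?thesis unfolding emb_graph_def using K by auto
qed

lemma fix_abs:
  fixes K :: "'a::{alg_closed_field, field_char_0} set"
  assumes K: "is_subfield K" and alg: "\<forall>x. algebraic_over K x"
    and fx: "\<forall>\<sigma>\<in>abs_gal K. \<sigma> u = u"
  shows "u \<in> K"
proof (rule ccontr)
  assume uK: "u \<notin> K"
  have e: "emb_graph K (Id_on K)" using emb_Id_on[OF K] .
  have DK: "Domain (Id_on K) = K" by auto
  obtain p where mp: "is_minpoly K u p" using minpoly_exists[OF K subset_refl K] alg by blast
  have gfK: "gf (Id_on K) x = x" if "x \<in> K" for x
    using gf_eq[of "Id_on K" x x] that by (simp add: single_valued_def Id_on_def)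
  have "map_poly (gf (Id_on K)) p = p"
  proof (rule poly_eqI)
    fix n
    have "0 \<in> K" using K is_subfield_def by blast
    then have g0: "gf (Id_on K) 0 = 0" using gfK by blast
    have "coeff p n \<in> K" using mp unfolding is_minpoly_def polyin_def by blast
    then show "coeff (map_poly (gf (Id_on K)) p) n = coeff p n"
      using coeff_map_poly[of "gf (Id_on K)", OF g0] gfK by simp
  qed
  moreover obtain v where v: "poly p v = 0" "v \<noteq> u" using other_root[OF K mp uK] by blast
  ultimately have root: "poly (map_poly (gf (Id_on K)) p) v = 0" by simp
  have mp': "is_minpoly (Domain (Id_on K)) u p" using mp DK by simp
  obtain G where G: "emb_graph K G" "(u, v) \<in> G" using ext_step[OF K alg e mp' root] by blast
  obtain \<sigma> where "\<sigma> \<in> abs_gal K" "\<forall>x a. (x, a) \<in> G \<longrightarrow> \<sigma> x = a"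
    using extend_to_aut[OF K alg G(1)] by blast
  then show False using fx G(2) v(2) by metis
qed



lemma field_gen_subfield: "is_subfield (field_gen S)"
proof -
  let ?I = "\<Inter>{F. is_subfield F \<and> S \<subseteq> F}"
  have a0: "0 \<in> ?I" using sr0[OF subfield_subring] by blast
  have a1: "1 \<in> ?I" using sr1[OF subfield_subring] by blast
  have a2: "x + y \<in> ?I \<and> x - y \<in> ?I \<and> x * y \<in> ?I" if "x \<in> ?I" "y \<in> ?I" for x y
  proof -
    have "x + y \<in> F \<and> x - y \<in> F \<and> x * y \<in> F" if "is_subfield F" "S \<subseteq> F" for F
      using \<open>x \<in> ?I\<close> \<open>y \<in> ?I\<close> that sr_add[OF subfield_subring] sr_diff[OF subfield_subring]
        sr_mult[OF subfield_subring] by blast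
    then show ?thesis by blast
  qed
  have a3: "inverse x \<in> ?I" if "x \<in> ?I" for x
    using that sf_inverse by blast
  show ?thesis unfolding field_gen_def is_subfield_def
    by (intro conjI ballI a0 a1 a3) (simp_all add: a2)
qed

lemma field_gen_sub: "S \<subseteq> field_gen S"
  unfolding field_gen_def by auto

lemma field_gen_least: "is_subfield F \<Longrightarrow> S \<subseteq> F \<Longrightarrow> field_gen S \<subseteq> F"
  unfolding field_gen_def by auto

lemma subfield_UNIV: "is_subfield UNIV"
  unfolding is_subfield_def by auto

lemma mu_finite: "m > 0 \<Longrightarrow> finite (mu m :: 'a::field set)"
proof -
  assume m: "m > 0"
  define p :: "'a poly" where "p = monom 1 m - 1"
  have "coeff p m = 1" using m unfolding p_def by simp
  then have "p \<noteq> 0" by auto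
  moreover have "mu m = {z. poly p z = 0}" unfolding p_def mu_def by (simp add: poly_monom)
  ultimately show ?thesis using poly_roots_finite[of p] by simp
qed

lemma mu_nz: "m > 0 \<Longrightarrow> z \<in> mu m \<Longrightarrow> z \<noteq> 0"
  unfolding mu_def by (cases "z = 0") (simp_all add: zero_power)

context
  fixes E :: "'a::field set" and g :: "'a \<Rightarrow> 'a"
  assumes E: "is_subfield E" and h: "hom_on E g"
begin

lemma hE_add: "x \<in> E \<Longrightarrow> y \<in> E \<Longrightarrow> g (x + y) = g x + g y"
  using hom_add[OF subfield_subring[OF E] h] .
lemma hE_mult: "x \<in> E \<Longrightarrow> y \<in> E \<Longrightarrow> g (x * y) = g x * g y"
  using hom_mult[OF subfield_subring[OF E] h] .
lemma hE_1: "g 1 = 1" using hom_1[OF subfield_subring[OF E] h] .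
lemma hE_0: "g 0 = 0" using hom_0[OF subfield_subring[OF E] h] .
lemma hE_diff: "x \<in> E \<Longrightarrow> y \<in> E \<Longrightarrow> g (x - y) = g x - g y"
  using hom_diff[OF subfield_subring[OF E] h] .
lemma hE_sum: "(\<And>i. i \<in> A \<Longrightarrow> f i \<in> E) \<Longrightarrow> g (sum f A) = (\<Sum>i\<in>A. g (f i))"
  using hom_sum[OF subfield_subring[OF E] h] .
lemma hE_pow: "x \<in> E \<Longrightarrow> g (x ^ n) = g x ^ n"
proof (induction n)
  case 0 then show ?case using hE_1 by simp
next
  case (Suc n)
  then show ?case using hE_mult[of x "x ^ n"] sr_pow[OF subfield_subring[OF E]] by simp
qed
lemma hE_inverse: "x \<in> E \<Longrightarrow> g (inverse x) = inverse (g x)"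
proof (cases "x = 0")
  case True then show ?thesis using hE_0 by simp
next
  case False
  assume x: "x \<in> E"
  have "g (x * inverse x) = 1" using False hE_1 by simp
  then have "g x * g (inverse x) = 1" using hE_mult[OF x sf_inverse[OF E x]] by simp
  then show ?thesis by (metis inverse_unique)
qed
lemma hE_divide: "x \<in> E \<Longrightarrow> y \<in> E \<Longrightarrow> g (x / y) = g x / g y"
  using hE_mult[OF _ sf_inverse[OF E]] hE_inverse by (simp add: divide_inverse)
lemma hE_nz: "x \<in> E \<Longrightarrow> x \<noteq> 0 \<Longrightarrow> g x \<noteq> 0"
  using hE_inverse[of x] hE_mult[OF _ sf_inverse[OF E], of x x] hE_1 by auto

end

lemma abs_gal_hom: "\<sigma> \<in> abs_gal K \<Longrightarrow> hom_on UNIV \<sigma>"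
  unfolding abs_gal_def hom_on_def by auto

lemma abs_gal_fix: "\<sigma> \<in> abs_gal K \<Longrightarrow> x \<in> K \<Longrightarrow> \<sigma> x = x"
  unfolding abs_gal_def by auto

lemma abs_gal_bij: "\<sigma> \<in> abs_gal K \<Longrightarrow> bij \<sigma>"
  unfolding abs_gal_def by auto

lemma abs_gal_inv:
  assumes s: "\<sigma> \<in> abs_gal K"
  shows "inv \<sigma> \<in> abs_gal K"
proof -
  have b: "bij \<sigma>" using abs_gal_bij[OF s] .
  have hs: "hom_on UNIV \<sigma>" using abs_gal_hom[OF s] .
  have ii: "inv \<sigma> (\<sigma> x) = x" for x using b by (simp add: bij_is_inj)
  have si: "\<sigma> (inv \<sigma> x) = x" for x using b by (simp add: bij_is_surj surj_f_inv_f)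
  have "inv \<sigma> (x + y) = inv \<sigma> x + inv \<sigma> y" for x y
    using hE_add[OF subfield_UNIV hs, of "inv \<sigma> x" "inv \<sigma> y"] si ii by (metis UNIV_I)
  moreover have "inv \<sigma> (x * y) = inv \<sigma> x * inv \<sigma> y" for x y
    using hE_mult[OF subfield_UNIV hs, of "inv \<sigma> x" "inv \<sigma> y"] si ii by (metis UNIV_I)
  moreover have "inv \<sigma> 1 = 1" using hE_1[OF subfield_UNIV hs] ii by metis
  moreover have "inv \<sigma> x = x" if "x \<in> K" for x using abs_gal_fix[OF s that] ii by metis
  moreover have "bij (inv \<sigma>)" using b by (simp add: bij_imp_bij_inv)
  ultimately show ?thesis unfolding abs_gal_def by blast
qed

lemma cyc_subfield: "is_subfield (cyc K m)"
  unfolding cyc_def by (rule field_gen_subfield)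
lemma K_cyc: "K \<subseteq> cyc K m"
  unfolding cyc_def using field_gen_sub by blast
lemma mu_cyc: "mu m \<subseteq> cyc K m"
  unfolding cyc_def using field_gen_sub by blast

lemma abs_gal_maps_cyc:
  assumes s: "\<sigma> \<in> abs_gal K" and x: "x \<in> cyc K m"
  shows "\<sigma> x \<in> cyc K m"
proof -
  define E where "E = cyc K m"
  have hs: "hom_on UNIV \<sigma>" using abs_gal_hom[OF s] .
  have Ef: "is_subfield E" unfolding E_def by (rule cyc_subfield)
  have "is_subfield {x. \<sigma> x \<in> E}"
    unfolding is_subfield_def
    using hE_0[OF subfield_UNIV hs] hE_1[OF subfield_UNIV hs] hE_add[OF subfield_UNIV hs]
      hE_diff[OF subfield_UNIV hs] hE_mult[OF subfield_UNIV hs] hE_inverse[OF subfield_UNIV hs] Ef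
    unfolding is_subfield_def by simp
  moreover have "K \<union> mu m \<subseteq> {x. \<sigma> x \<in> E}"
  proof
    fix z assume "z \<in> K \<union> mu m"
    then show "z \<in> {x. \<sigma> x \<in> E}"
    proof
      assume "z \<in> K" then show ?thesis using abs_gal_fix[OF s] K_cyc E_def by fastforce
    next
      assume z: "z \<in> mu m"
      then have "\<sigma> z ^ m = 1" using hE_pow[OF subfield_UNIV hs, of z m] hE_1[OF subfield_UNIV hs]
        unfolding mu_def by simp
      then show ?thesis using mu_cyc E_def unfolding mu_def by blast
    qed
  qed
  ultimately have "cyc K m \<subseteq> {x. \<sigma> x \<in> E}" unfolding cyc_def by (rule field_gen_least)
  then show ?thesis using x E_def by blast
qed

lemma restrict_in_gal:
  assumes s: "\<sigma> \<in> abs_gal K"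
  shows "restrict \<sigma> (cyc K m) \<in> gal_cyc K m"
proof -
  define E where "E = cyc K m"
  have b: "bij \<sigma>" using abs_gal_bij[OF s] .
  have si: "\<sigma> (inv \<sigma> x) = x" for x using b by (simp add: bij_is_surj surj_f_inv_f)
  have "\<sigma> ` E = E"
  proof
    show "\<sigma> ` E \<subseteq> E" using abs_gal_maps_cyc[OF s] E_def by blast
    show "E \<subseteq> \<sigma> ` E"
    proof
      fix x assume "x \<in> E"
      then have "inv \<sigma> x \<in> E" using abs_gal_maps_cyc[OF abs_gal_inv[OF s]] E_def by blast
      then show "x \<in> \<sigma> ` E" using si by (metis image_eqI)
    qed
  qed
  moreover have "inj_on \<sigma> E" using b bij_is_inj inj_on_subset by blast
  ultimately have "bij_betw \<sigma> E E" unfolding bij_betw_def by blast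
  moreover have "bij_betw (restrict \<sigma> E) E E = bij_betw \<sigma> E E" by (rule bij_betw_cong) simp
  ultimately have bb: "bij_betw (restrict \<sigma> E) E E" by blast
  have Ef: "is_subfield E" unfolding E_def by (rule cyc_subfield)
  have "1 \<in> E" using sr1[OF subfield_subring[OF Ef]] .
  have P1: "restrict \<sigma> E \<in> extensional E" by simp
  have P2: "\<forall>x\<in>E. \<forall>y\<in>E. restrict \<sigma> E (x + y) = restrict \<sigma> E x + restrict \<sigma> E y \<and>
      restrict \<sigma> E (x * y) = restrict \<sigma> E x * restrict \<sigma> E y"
    using sr_add[OF subfield_subring[OF Ef]] sr_mult[OF subfield_subring[OF Ef]] s unfolding abs_gal_def by auto
  have P3: "\<forall>x\<in>K. restrict \<sigma> E x = x" using K_cyc s unfolding E_def abs_gal_def by auto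
  have P4: "restrict \<sigma> E 1 = 1" using \<open>1 \<in> E\<close> s unfolding abs_gal_def by auto
  have "restrict \<sigma> E \<in> gal_cyc K m" unfolding gal_cyc_def mem_Collect_eq E_def[symmetric]
    using P1 P2 P3 P4 bb by (intro conjI) assumption+
  then show ?thesis unfolding E_def .
qed

lemma fix_gal:
  fixes K :: "'a::{alg_closed_field, field_char_0} set"
  assumes K: "is_subfield K" and alg: "\<forall>x. algebraic_over K x"
    and u: "u \<in> cyc K m" and fx: "\<forall>g\<in>gal_cyc K m. g u = u"
  shows "u \<in> K"
proof (rule fix_abs[OF K alg])
  show "\<forall>\<sigma>\<in>abs_gal K. \<sigma> u = u"
  proof
    fix \<sigma> assume "\<sigma> \<in> abs_gal K"
    then have "restrict \<sigma> (cyc K m) u = u" using restrict_in_gal fx by blast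
    then show "\<sigma> u = u" using u by simp
  qed
qed



lemma dedekind:
  fixes E :: "'a::field set" and T :: "('a \<Rightarrow> 'a) set"
  assumes E: "is_subfield E" and fin: "finite T" and hT: "\<forall>\<tau>\<in>T. hom_on E \<tau>"
    and dist: "\<forall>\<tau>1\<in>T. \<forall>\<tau>2\<in>T. \<tau>1 \<noteq> \<tau>2 \<longrightarrow> (\<exists>x\<in>E. \<tau>1 x \<noteq> \<tau>2 x)"
    and zero: "\<forall>\<gamma>\<in>E. (\<Sum>\<tau>\<in>T. a \<tau> * \<tau> \<gamma>) = 0"
  shows "\<forall>\<tau>\<in>T. a \<tau> = 0"
  using fin hT dist zero
proof (induction T arbitrary: a rule: finite_induct)
  case empty
  then show ?case by simp
next
  case (insert \<tau>0 T')
  have h0: "hom_on E \<tau>0" using insert.prems by blast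
  have hT': "\<forall>\<tau>\<in>T'. hom_on E \<tau>" using insert.prems by blast
  have dist': "\<forall>\<tau>1\<in>T'. \<forall>\<tau>2\<in>T'. \<tau>1 \<noteq> \<tau>2 \<longrightarrow> (\<exists>x\<in>E. \<tau>1 x \<noteq> \<tau>2 x)"
    using insert.prems(2) by blast
  have z: "a \<tau>0 * \<tau>0 \<gamma> + (\<Sum>\<tau>\<in>T'. a \<tau> * \<tau> \<gamma>) = 0" if "\<gamma> \<in> E" for \<gamma>
    using insert.prems(3) that insert.hyps by simp
  have b0: "\<forall>\<tau>\<in>T'. a \<tau> * (\<tau> h - \<tau>0 h) = 0" if hE: "h \<in> E" for h
  proof (rule insert.IH[OF hT' dist'])
    show "\<forall>\<gamma>\<in>E. (\<Sum>\<tau>\<in>T'. a \<tau> * (\<tau> h - \<tau>0 h) * \<tau> \<gamma>) = 0"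
    proof
      fix \<gamma> assume g: "\<gamma> \<in> E"
      have hg: "h * \<gamma> \<in> E" using sr_mult[OF subfield_subring[OF E] hE g] .
      have m: "\<tau> (h * \<gamma>) = \<tau> h * \<tau> \<gamma>" if "\<tau> \<in> insert \<tau>0 T'" for \<tau>
        using hE_mult[OF E _ hE g] insert.prems(1) that by blast
      have "a \<tau>0 * (\<tau>0 h * \<tau>0 \<gamma>) + (\<Sum>\<tau>\<in>T'. a \<tau> * (\<tau> h * \<tau> \<gamma>)) = 0"
        using z[OF hg] m by simp
      moreover have "\<tau>0 h * (a \<tau>0 * \<tau>0 \<gamma> + (\<Sum>\<tau>\<in>T'. a \<tau> * \<tau> \<gamma>)) = 0" using z[OF g] by simp
      then have "a \<tau>0 * (\<tau>0 h * \<tau>0 \<gamma>) + \<tau>0 h * (\<Sum>\<tau>\<in>T'. a \<tau> * \<tau> \<gamma>) = 0"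
        by algebra
      ultimately have "(\<Sum>\<tau>\<in>T'. a \<tau> * (\<tau> h * \<tau> \<gamma>)) - \<tau>0 h * (\<Sum>\<tau>\<in>T'. a \<tau> * \<tau> \<gamma>) = 0"
        by algebra
      moreover have "(\<Sum>\<tau>\<in>T'. a \<tau> * (\<tau> h - \<tau>0 h) * \<tau> \<gamma>) =
          (\<Sum>\<tau>\<in>T'. a \<tau> * (\<tau> h * \<tau> \<gamma>)) - \<tau>0 h * (\<Sum>\<tau>\<in>T'. a \<tau> * \<tau> \<gamma>)"
      proof -
        have "(\<Sum>\<tau>\<in>T'. a \<tau> * (\<tau> h - \<tau>0 h) * \<tau> \<gamma>) =
            (\<Sum>\<tau>\<in>T'. a \<tau> * (\<tau> h * \<tau> \<gamma>) - \<tau>0 h * (a \<tau> * \<tau> \<gamma>))"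
          by (rule sum.cong) (simp_all add: algebra_simps)
        also have "\<dots> = (\<Sum>\<tau>\<in>T'. a \<tau> * (\<tau> h * \<tau> \<gamma>)) - (\<Sum>\<tau>\<in>T'. \<tau>0 h * (a \<tau> * \<tau> \<gamma>))"
          by (rule sum_subtractf)
        finally show ?thesis by (simp add: sum_distrib_left)
      qed
      ultimately show "(\<Sum>\<tau>\<in>T'. a \<tau> * (\<tau> h - \<tau>0 h) * \<tau> \<gamma>) = 0" by simp
    qed
  qed
  have aT': "a \<tau> = 0" if t: "\<tau> \<in> T'" for \<tau>
  proof -
    have "\<tau> \<noteq> \<tau>0" using t insert.hyps by blast
    then obtain h where hE: "h \<in> E" and ne: "\<tau> h \<noteq> \<tau>0 h" using insert.prems(2) t by blast
    then have "a \<tau> * (\<tau> h - \<tau>0 h) = 0" using b0 t by blast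
    then show ?thesis using ne by simp
  qed
  have "1 \<in> E" using sr1[OF subfield_subring[OF E]] .
  then have "a \<tau>0 * \<tau>0 1 + (\<Sum>\<tau>\<in>T'. a \<tau> * \<tau> 1) = 0" using z by blast
  then have "a \<tau>0 = 0" using aT' hE_1[OF E h0] by simp
  then show ?case using aT' by blast
qed

context
  fixes K :: "'a::field set" and m :: nat
begin

lemma gal_ext: "g \<in> gal_cyc K m \<Longrightarrow> g \<in> extensional (cyc K m)"
  unfolding gal_cyc_def by blast
lemma gal_bij: "g \<in> gal_cyc K m \<Longrightarrow> bij_betw g (cyc K m) (cyc K m)"
  unfolding gal_cyc_def by blast
lemma gal_hom: "g \<in> gal_cyc K m \<Longrightarrow> hom_on (cyc K m) g"
  unfolding gal_cyc_def hom_on_def by blast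
lemma gal_fix: "g \<in> gal_cyc K m \<Longrightarrow> x \<in> K \<Longrightarrow> g x = x"
  unfolding gal_cyc_def by blast
lemma gal_maps: "g \<in> gal_cyc K m \<Longrightarrow> x \<in> cyc K m \<Longrightarrow> g x \<in> cyc K m"
  using gal_bij bij_betwE by blast
lemma gal_eq: "g \<in> gal_cyc K m \<Longrightarrow> h \<in> gal_cyc K m \<Longrightarrow> (\<And>x. x \<in> cyc K m \<Longrightarrow> g x = h x) \<Longrightarrow> g = h"
  using gal_ext extensionalityI by metis

lemma gal_comp_apply: "x \<in> cyc K m \<Longrightarrow> gal_cyc_comp K m g h x = g (h x)"
  unfolding gal_cyc_comp_def by simp

lemma gal_comp_in:
  assumes g: "g \<in> gal_cyc K m" and h: "h \<in> gal_cyc K m"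
  shows "gal_cyc_comp K m g h \<in> gal_cyc K m"
proof -
  let ?E = "cyc K m"
  let ?c = "gal_cyc_comp K m g h"
  have Ef: "is_subfield ?E" by (rule cyc_subfield)
  have P1: "?c \<in> extensional ?E" unfolding gal_cyc_comp_def by simp
  have "bij_betw (g \<circ> h) ?E ?E" using bij_betw_trans[OF gal_bij[OF h] gal_bij[OF g]] .
  moreover have "bij_betw ?c ?E ?E = bij_betw (g \<circ> h) ?E ?E" unfolding gal_cyc_comp_def
    by (rule bij_betw_cong) simp
  ultimately have P2: "bij_betw ?c ?E ?E" by blast
  have P3: "\<forall>x\<in>?E. \<forall>y\<in>?E. ?c (x + y) = ?c x + ?c y \<and> ?c (x * y) = ?c x * ?c y"
  proof (intro ballI conjI)
    fix x y assume x: "x \<in> ?E" and y: "y \<in> ?E"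
    have xy: "x + y \<in> ?E" "x * y \<in> ?E" using sr_add[OF subfield_subring[OF Ef] x y] sr_mult[OF subfield_subring[OF Ef] x y] by auto
    show "?c (x + y) = ?c x + ?c y"
      using gal_comp_apply[OF xy(1)] gal_comp_apply[OF x] gal_comp_apply[OF y]
        hE_add[OF Ef gal_hom[OF h] x y] hE_add[OF Ef gal_hom[OF g] gal_maps[OF h x] gal_maps[OF h y]] by simp
    show "?c (x * y) = ?c x * ?c y"
      using gal_comp_apply[OF xy(2)] gal_comp_apply[OF x] gal_comp_apply[OF y]
        hE_mult[OF Ef gal_hom[OF h] x y] hE_mult[OF Ef gal_hom[OF g] gal_maps[OF h x] gal_maps[OF h y]] by simp
  qed
  have one: "1 \<in> ?E" using sr1[OF subfield_subring[OF Ef]] .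
  have P4: "?c 1 = 1" using gal_comp_apply[OF one] hE_1[OF Ef gal_hom[OF h]] hE_1[OF Ef gal_hom[OF g]] by simp
  have P5: "\<forall>x\<in>K. ?c x = x" using gal_comp_apply K_cyc gal_fix[OF g] gal_fix[OF h] by (metis subsetD)
  show ?thesis unfolding gal_cyc_def mem_Collect_eq using P1 P2 P3 P4 P5 by (intro conjI) assumption+
qed

lemma gal_mu: "g \<in> gal_cyc K m \<Longrightarrow> z \<in> mu m \<Longrightarrow> g z \<in> mu m"
proof -
  assume g: "g \<in> gal_cyc K m" and z: "z \<in> mu m"
  have "z \<in> cyc K m" using z mu_cyc by blast
  then have "g z ^ m = g (z ^ m)" using hE_pow[OF cyc_subfield gal_hom[OF g]] by simp
  also have "\<dots> = 1" using z hE_1[OF cyc_subfield gal_hom[OF g]] unfolding mu_def by simp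
  finally show ?thesis unfolding mu_def by simp
qed

lemma gal_det:
  assumes g: "g \<in> gal_cyc K m" and h: "h \<in> gal_cyc K m" and eq: "\<forall>z\<in>mu m. g z = h z"
  shows "g = h"
proof -
  let ?E = "cyc K m"
  have Ef: "is_subfield ?E" by (rule cyc_subfield)
  let ?Q = "{x \<in> ?E. g x = h x}"
  have sr: "is_subring ?E" using subfield_subring[OF Ef] .
  have hg: "hom_on ?E g" and hh: "hom_on ?E h" using gal_hom g h by auto
  have "is_subfield ?Q" unfolding is_subfield_def
  proof (intro conjI ballI)
    show "0 \<in> ?Q" using sr0[OF sr] hE_0[OF Ef hg] hE_0[OF Ef hh] by simp
    show "1 \<in> ?Q" using sr1[OF sr] hE_1[OF Ef hg] hE_1[OF Ef hh] by simp
    fix x assume x: "x \<in> ?Q"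
    show "inverse x \<in> ?Q" using x sf_inverse[OF Ef] hE_inverse[OF Ef hg] hE_inverse[OF Ef hh] by simp
    fix y assume y: "y \<in> ?Q"
    show "x + y \<in> ?Q" using x y sr_add[OF sr] hE_add[OF Ef hg] hE_add[OF Ef hh] by simp
    show "x - y \<in> ?Q" using x y sr_diff[OF sr] hE_diff[OF Ef hg] hE_diff[OF Ef hh] by simp
    show "x * y \<in> ?Q" using x y sr_mult[OF sr] hE_mult[OF Ef hg] hE_mult[OF Ef hh] by simp
  qed
  moreover have "K \<union> mu m \<subseteq> ?Q" using K_cyc[of K m] mu_cyc[of m K] eq gal_fix[OF g] gal_fix[OF h] by auto
  ultimately have "?E \<subseteq> ?Q" unfolding cyc_def by (rule field_gen_least)
  then show ?thesis using gal_eq[OF g h] by blast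
qed

lemma gal_finite:
  assumes m: "m > 0"
  shows "finite (gal_cyc K m)"
proof -
  let ?r = "\<lambda>g. restrict g (mu m)"
  have "inj_on ?r (gal_cyc K m)"
  proof (rule inj_onI)
    fix g h assume g: "g \<in> gal_cyc K m" and h: "h \<in> gal_cyc K m" and e: "?r g = ?r h"
    have "\<forall>z\<in>(mu m :: 'a set). g z = h z"
    proof
      fix z :: 'a assume "z \<in> mu m"
      then show "g z = h z" using e by (metis restrict_apply')
    qed
    then show "g = h" using gal_det[OF g h] by blast
  qed
  moreover have "?r ` gal_cyc K m \<subseteq> Pi\<^sub>E (mu m) (\<lambda>_. mu m)" using gal_mu by auto
  moreover have "finite (Pi\<^sub>E (mu m) (\<lambda>_. mu m))" by (intro finite_PiE mu_finite[OF m])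
  ultimately show ?thesis using finite_imageD finite_subset by blast
qed

end

lemma hilbert90:
  fixes K :: "'a::field set"
  assumes m: "m > 0"
    and f: "cocycle (gal_cyc_comp K m) (gal_cyc K m) (\<lambda>g. g) (mu m) f"
  shows "\<exists>\<beta>\<in>cyc K m. \<beta> \<noteq> 0 \<and> (\<forall>g\<in>gal_cyc K m. f g = g \<beta> / \<beta>)"
proof -
  let ?E = "cyc K m" and ?G = "gal_cyc K m"
  have Ef: "is_subfield ?E" by (rule cyc_subfield)
  have sr: "is_subring ?E" using subfield_subring[OF Ef] .
  have fin: "finite ?G" using gal_finite[OF m] .
  have fmu: "f g \<in> mu m" if "g \<in> ?G" for g using f that unfolding cocycle_def by blast
  have fE: "f g \<in> ?E" if "g \<in> ?G" for g using fmu[OF that] mu_cyc by blast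
  have fnz: "f g \<noteq> 0" if "g \<in> ?G" for g using mu_nz[OF m fmu[OF that]] .
  have fco: "f (gal_cyc_comp K m g h) = f g * g (f h)" if "g \<in> ?G" "h \<in> ?G" for g h
    using f that unfolding cocycle_def by blast
  have "\<exists>\<gamma>\<in>?E. (\<Sum>\<tau>\<in>?G. f \<tau> * \<tau> \<gamma>) \<noteq> 0"
  proof (rule ccontr)
    assume "\<not> ?thesis"
    then have z: "\<forall>\<gamma>\<in>?E. (\<Sum>\<tau>\<in>?G. f \<tau> * \<tau> \<gamma>) = 0" by blast
    have hT: "\<forall>\<tau>\<in>?G. hom_on ?E \<tau>" using gal_hom by blast
    have dist: "\<forall>\<tau>1\<in>?G. \<forall>\<tau>2\<in>?G. \<tau>1 \<noteq> \<tau>2 \<longrightarrow> (\<exists>x\<in>?E. \<tau>1 x \<noteq> \<tau>2 x)"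
      using gal_eq by blast
    have "\<forall>\<tau>\<in>?G. f \<tau> = 0" using dedekind[OF Ef fin hT dist z] .
    moreover have "restrict (\<lambda>x. x) ?E \<in> ?G"
    proof -
      have "bij_betw (restrict (\<lambda>x. x) ?E) ?E ?E = bij_betw (\<lambda>x. x) ?E ?E" by (rule bij_betw_cong) simp
      moreover have "bij_betw (\<lambda>x. x) ?E ?E" by (simp add: bij_betw_def)
      ultimately have "bij_betw (restrict (\<lambda>x. x) ?E) ?E ?E" by blast
      moreover have "1 \<in> ?E" using sr1[OF sr] .
      ultimately have P2: "bij_betw (restrict (\<lambda>x. x) ?E) ?E ?E" "1 \<in> ?E" by blast+
      have P1: "restrict (\<lambda>x. x) ?E \<in> extensional ?E" by simp
      have P3: "\<forall>x\<in>?E. \<forall>y\<in>?E. restrict (\<lambda>x. x) ?E (x + y) = restrict (\<lambda>x. x) ?E x + restrict (\<lambda>x. x) ?E y \<and>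
          restrict (\<lambda>x. x) ?E (x * y) = restrict (\<lambda>x. x) ?E x * restrict (\<lambda>x. x) ?E y"
        using sr_add[OF sr] sr_mult[OF sr] by simp
      have P4: "restrict (\<lambda>x. x) ?E 1 = 1" using P2(2) by simp
      have P5: "\<forall>x\<in>K. restrict (\<lambda>x. x) ?E x = x" using K_cyc[of K m] by auto
      show ?thesis unfolding gal_cyc_def mem_Collect_eq using P1 P2(1) P3 P4 P5 by (intro conjI) assumption+
    qed
    ultimately show False using fnz by blast
  qed
  then obtain \<gamma> where g: "\<gamma> \<in> ?E" and b'nz: "(\<Sum>\<tau>\<in>?G. f \<tau> * \<tau> \<gamma>) \<noteq> 0" by blast
  define b' where "b' = (\<Sum>\<tau>\<in>?G. f \<tau> * \<tau> \<gamma>)"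
  have tE: "f \<tau> * \<tau> \<gamma> \<in> ?E" if "\<tau> \<in> ?G" for \<tau>
    using sr_mult[OF sr fE[OF that] gal_maps[OF that g]] .
  have b'E: "b' \<in> ?E" unfolding b'_def by (rule sr_sum[OF sr]) (rule tE)
  have act: "g b' = b' / f g" if gG: "g \<in> ?G" for g
  proof -
    have hg: "hom_on ?E g" using gal_hom[OF gG] .
    have "g b' = (\<Sum>\<tau>\<in>?G. g (f \<tau> * \<tau> \<gamma>))" unfolding b'_def by (rule hE_sum[OF Ef hg]) (rule tE)
    also have "\<dots> = (\<Sum>\<tau>\<in>?G. g (f \<tau>) * g (\<tau> \<gamma>))"
    proof (rule sum.cong[OF refl])
      fix \<tau> assume t: "\<tau> \<in> ?G"
      show "g (f \<tau> * \<tau> \<gamma>) = g (f \<tau>) * g (\<tau> \<gamma>)" using hE_mult[OF Ef hg fE[OF t] gal_maps[OF t g]] .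
    qed
    also have "\<dots> = (\<Sum>\<tau>\<in>?G. (f (gal_cyc_comp K m g \<tau>) / f g) * gal_cyc_comp K m g \<tau> \<gamma>)"
    proof (rule sum.cong[OF refl])
      fix \<tau> assume t: "\<tau> \<in> ?G"
      have "g (f \<tau>) = f (gal_cyc_comp K m g \<tau>) / f g" using fco[OF gG t] fnz[OF gG] by simp
      moreover have "g (\<tau> \<gamma>) = gal_cyc_comp K m g \<tau> \<gamma>" using gal_comp_apply[OF g] by simp
      ultimately show "g (f \<tau>) * g (\<tau> \<gamma>) = (f (gal_cyc_comp K m g \<tau>) / f g) * gal_cyc_comp K m g \<tau> \<gamma>" by simp
    qed
    also have "\<dots> = (\<Sum>\<tau>\<in>?G. f (gal_cyc_comp K m g \<tau>) * gal_cyc_comp K m g \<tau> \<gamma>) / f g"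
      by (simp add: sum_divide_distrib)
    also have "(\<Sum>\<tau>\<in>?G. f (gal_cyc_comp K m g \<tau>) * gal_cyc_comp K m g \<tau> \<gamma>) = b'"
    proof -
      have inj: "inj_on (gal_cyc_comp K m g) ?G"
      proof (rule inj_onI)
        fix t1 t2 assume t1: "t1 \<in> ?G" and t2: "t2 \<in> ?G" and e: "gal_cyc_comp K m g t1 = gal_cyc_comp K m g t2"
        have "t1 x = t2 x" if x: "x \<in> ?E" for x
        proof -
          have "g (t1 x) = g (t2 x)" using e gal_comp_apply[OF x] by metis
          then show ?thesis using gal_bij[OF gG] gal_maps[OF t1 x] gal_maps[OF t2 x]
            by (meson bij_betw_imp_inj_on inj_onD)
        qed
        then show "t1 = t2" using gal_eq[OF t1 t2] by blast
      qed
      have img: "gal_cyc_comp K m g ` ?G = ?G"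
        using endo_inj_surj[OF fin _ inj] gal_comp_in[OF gG] by blast
      have "(\<Sum>\<tau>\<in>?G. f (gal_cyc_comp K m g \<tau>) * gal_cyc_comp K m g \<tau> \<gamma>)
          = (\<Sum>\<tau>\<in>gal_cyc_comp K m g ` ?G. f \<tau> * \<tau> \<gamma>)"
        using sum.reindex[OF inj, of "\<lambda>\<tau>. f \<tau> * \<tau> \<gamma>"] by simp
      then show ?thesis unfolding b'_def using img by simp
    qed
    finally show ?thesis .
  qed
  have b'nz2: "b' \<noteq> 0" using b'nz b'_def by simp
  define \<beta> where "\<beta> = inverse b'"
  have bE: "\<beta> \<in> ?E" unfolding \<beta>_def using sf_inverse[OF Ef b'E] .
  have bnz: "\<beta> \<noteq> 0" unfolding \<beta>_def using b'nz2 by simp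
  have "f g = g \<beta> / \<beta>" if gG: "g \<in> ?G" for g
  proof -
    have "g \<beta> = inverse (g b')" unfolding \<beta>_def using hE_inverse[OF Ef gal_hom[OF gG] b'E] .
    then have "g \<beta> = f g / b'" using act[OF gG] fnz[OF gG] b'nz2 by (simp add: field_simps)
    then show ?thesis unfolding \<beta>_def using b'nz2 by (simp add: field_simps)
  qed
  then show ?thesis using bE bnz by blast
qed



lemma gal_nz: "g \<in> gal_cyc K m \<Longrightarrow> x \<in> cyc K m \<Longrightarrow> x \<noteq> 0 \<Longrightarrow> g x \<noteq> 0"
  using hE_nz[OF cyc_subfield gal_hom] by blast

lemma coboundary_gal:
  fixes K :: "'a::field set"
  assumes aE: "\<alpha> \<in> cyc K m" and anz: "\<alpha> \<noteq> 0" and aK: "\<alpha> ^ L \<in> K"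
  shows "cocycle (gal_cyc_comp K m) (gal_cyc K m) (\<lambda>g. g) (mu L) (\<lambda>g. g \<alpha> / \<alpha>)"
  unfolding cocycle_def
proof (intro conjI ballI)
  let ?E = "cyc K m"
  have Ef: "is_subfield ?E" by (rule cyc_subfield)
  fix g assume g: "g \<in> gal_cyc K m"
  have "(g \<alpha> / \<alpha>) ^ L = g (\<alpha> ^ L) / \<alpha> ^ L"
    using hE_pow[OF Ef gal_hom[OF g] aE] by (simp add: power_divide)
  also have "\<dots> = 1" using gal_fix[OF g aK] anz by simp
  finally show "g \<alpha> / \<alpha> \<in> mu L" unfolding mu_def by simp
  fix h assume h: "h \<in> gal_cyc K m"
  have haE: "h \<alpha> \<in> ?E" using gal_maps[OF h aE] .
  have "gal_cyc_comp K m g h \<alpha> = g (h \<alpha>)" using gal_comp_apply[OF aE] .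
  moreover have "g (h \<alpha> / \<alpha>) = g (h \<alpha>) / g \<alpha>" using hE_divide[OF Ef gal_hom[OF g] haE aE] .
  moreover have "g \<alpha> \<noteq> 0" using gal_nz[OF g aE anz] .
  ultimately show "gal_cyc_comp K m g h \<alpha> / \<alpha> = g \<alpha> / \<alpha> * g (h \<alpha> / \<alpha>)" by simp
qed

lemma coboundary_abs:
  fixes K :: "'a::field set"
  assumes anz: "\<alpha> \<noteq> 0" and aK: "\<alpha> ^ L \<in> K"
  shows "cont_cocycle K (mu L) (\<lambda>\<sigma>. \<sigma> \<alpha> / \<alpha>)"
  unfolding cont_cocycle_def cocycle_def
proof (intro conjI ballI)
  fix g assume g: "g \<in> abs_gal K"
  have hg: "hom_on UNIV g" using abs_gal_hom[OF g] .
  have "(g \<alpha> / \<alpha>) ^ L = g (\<alpha> ^ L) / \<alpha> ^ L"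
    using hE_pow[OF subfield_UNIV hg] by (simp add: power_divide)
  also have "\<dots> = 1" using abs_gal_fix[OF g aK] anz by simp
  finally show "g \<alpha> / \<alpha> \<in> mu L" unfolding mu_def by simp
  fix h assume h: "h \<in> abs_gal K"
  have "g (h \<alpha> / \<alpha>) = g (h \<alpha>) / g \<alpha>" using hE_divide[OF subfield_UNIV hg] by simp
  moreover have "g \<alpha> \<noteq> 0" using hE_nz[OF subfield_UNIV hg] anz by simp
  ultimately show "(g \<circ> h) \<alpha> / \<alpha> = g \<alpha> / \<alpha> * g (h \<alpha> / \<alpha>)" by simp
next
  show "\<exists>S. finite S \<and> (\<forall>\<sigma>\<in>abs_gal K. \<forall>\<tau>\<in>abs_gal K. (\<forall>x\<in>S. \<sigma> x = \<tau> x) \<longrightarrow> \<sigma> \<alpha> / \<alpha> = \<tau> \<alpha> / \<alpha>)"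
    by (intro exI[of _ "{\<alpha>}"]) simp
qed

lemma cb_core:
  fixes K :: "'a::{alg_closed_field, field_char_0} set"
  assumes K: "is_subfield K" and alg: "\<forall>x. algebraic_over K x"
    and L: "L > 0" and n: "n > 0" and cb: "CB_prop K L"
    and f: "cocycle (gal_cyc_comp K (L * n)) (gal_cyc K (L * n)) (\<lambda>g. g) (mu (L * n)) f"
  shows "\<exists>\<beta> \<eta>. \<beta> \<in> cyc K (L * n) \<and> \<beta> \<noteq> 0 \<and> (\<forall>g\<in>gal_cyc K (L * n). f g = g \<beta> / \<beta>) \<and>
     \<eta> \<in> mu (L * n) \<and> (\<beta> / \<eta>) ^ L \<in> K"
proof -
  define m where "m = L * n"
  have m: "m > 0" using L n m_def by simp
  let ?E = "cyc K m"
  have Ef: "is_subfield ?E" by (rule cyc_subfield)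
  obtain \<beta> where bE: "\<beta> \<in> ?E" and bnz: "\<beta> \<noteq> 0" and fb: "\<forall>g\<in>gal_cyc K m. f g = g \<beta> / \<beta>"
    using hilbert90[OF m] f m_def by blast
  have fmu: "f g \<in> mu m" if "g \<in> gal_cyc K m" for g using f that m_def unfolding cocycle_def by blast
  have xE: "\<beta> ^ m \<in> ?E" using sr_pow[OF subfield_subring[OF Ef] bE] .
  have "g (\<beta> ^ m) = \<beta> ^ m" if g: "g \<in> gal_cyc K m" for g
  proof -
    have "g \<beta> = f g * \<beta>" using fb g bnz by simp
    then have "g (\<beta> ^ m) = f g ^ m * \<beta> ^ m" using hE_pow[OF Ef gal_hom[OF g] bE] by (simp add: power_mult_distrib)
    then show ?thesis using fmu[OF g] unfolding mu_def by simp
  qed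
  then have xK: "\<beta> ^ m \<in> K" using fix_gal[OF K alg xE] by blast
  have xnz: "\<beta> ^ m \<noteq> 0" using bnz by simp
  have "\<exists>z\<in>K - {0}. \<beta> ^ m = z ^ n"
    using cb n xK xnz bE bnz unfolding CB_prop_def m_def by blast
  then obtain z where zK: "z \<in> K" and znz: "z \<noteq> 0" and bz: "\<beta> ^ m = z ^ n" by blast
  define \<zeta> where "\<zeta> = \<beta> ^ L / z"
  have "\<zeta> ^ n = 1" unfolding \<zeta>_def using bz znz unfolding m_def by (simp add: power_divide power_mult)
  obtain \<eta> where eta: "\<eta> ^ L = \<zeta>" using nth_root_exists[OF L] by blast
  have "\<eta> ^ m = 1" unfolding m_def using eta \<open>\<zeta> ^ n = 1\<close> by (simp add: power_mult)
  then have emu: "\<eta> \<in> mu m" unfolding mu_def by simp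
  have "(\<beta> / \<eta>) ^ L = z" using eta bnz znz unfolding \<zeta>_def by (simp add: power_divide)
  then show ?thesis using bE bnz fb emu zK unfolding m_def by auto
qed

lemma cb_imp_ii:
  fixes K :: "'a::{alg_closed_field, field_char_0} set"
  assumes K: "is_subfield K" and alg: "\<forall>x. algebraic_over K x" and L: "L > 0" and cb: "CB_prop K L"
  shows "prop_ii K L"
  unfolding prop_ii_def
proof (intro allI impI)
  fix n :: nat and f assume n: "n > 0" and f: "cocycle (gal_cyc_comp K (L * n)) (gal_cyc K (L * n)) (\<lambda>g. g) (mu (L * n)) f"
  define m where "m = L * n"
  have m: "m > 0" using L n m_def by simp
  obtain \<beta> \<eta> where bE: "\<beta> \<in> cyc K m" and bnz: "\<beta> \<noteq> 0" and fb: "\<forall>g\<in>gal_cyc K m. f g = g \<beta> / \<beta>"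
    and emu: "\<eta> \<in> mu m" and aK: "(\<beta> / \<eta>) ^ L \<in> K"
    using cb_core[OF K alg L n cb f] m_def by blast
  have Ef: "is_subfield (cyc K m)" by (rule cyc_subfield)
  have eE: "\<eta> \<in> cyc K m" using emu mu_cyc by blast
  have enz: "\<eta> \<noteq> 0" using mu_nz[OF m emu] .
  have aE: "\<beta> / \<eta> \<in> cyc K m" using sf_divide[OF Ef bE eE] .
  have anz: "\<beta> / \<eta> \<noteq> 0" using bnz enz by simp
  have cc: "cocycle (gal_cyc_comp K m) (gal_cyc K m) (\<lambda>g. g) (mu L) (\<lambda>g. g (\<beta> / \<eta>) / (\<beta> / \<eta>))"
    using coboundary_gal[OF aE anz aK] .
  have "f g = g (\<beta> / \<eta>) / (\<beta> / \<eta>) * (g \<eta> / \<eta>)" if g: "g \<in> gal_cyc K m" for g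
  proof -
    have "g (\<beta> / \<eta>) = g \<beta> / g \<eta>" using hE_divide[OF Ef gal_hom[OF g] bE eE] .
    moreover have "g \<eta> \<noteq> 0" using gal_nz[OF g eE enz] .
    ultimately show ?thesis using fb g bnz enz by simp
  qed
  then have "cohomologous (gal_cyc K m) (\<lambda>g. g) (mu m) f (\<lambda>g. g (\<beta> / \<eta>) / (\<beta> / \<eta>))"
    unfolding cohomologous_def using emu by blast
  then show "\<exists>c. cocycle (gal_cyc_comp K (L * n)) (gal_cyc K (L * n)) (\<lambda>g. g) (mu L) c \<and>
          cohomologous (gal_cyc K (L * n)) (\<lambda>g. g) (mu (L * n)) f c"
    using cc m_def by blast
qed

lemma cb_imp_i:
  fixes K :: "'a::{alg_closed_field, field_char_0} set"
  assumes K: "is_subfield K" and alg: "\<forall>x. algebraic_over K x" and L: "L > 0" and cb: "CB_prop K L"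
  shows "prop_i K L"
  unfolding prop_i_def
proof (intro allI impI)
  fix n :: nat and f assume n: "n > 0" and f: "cocycle (gal_cyc_comp K (L * n)) (gal_cyc K (L * n)) (\<lambda>g. g) (mu (L * n)) f"
  define m where "m = L * n"
  have m: "m > 0" using L n m_def by simp
  obtain \<beta> \<eta> where bE: "\<beta> \<in> cyc K m" and bnz: "\<beta> \<noteq> 0" and fb: "\<forall>g\<in>gal_cyc K m. f g = g \<beta> / \<beta>"
    and emu: "\<eta> \<in> mu m" and aK: "(\<beta> / \<eta>) ^ L \<in> K"
    using cb_core[OF K alg L n cb f] m_def by blast
  have enz: "\<eta> \<noteq> 0" using mu_nz[OF m emu] .
  have anz: "\<beta> / \<eta> \<noteq> 0" using bnz enz by simp
  have cc: "cont_cocycle K (mu L) (\<lambda>\<sigma>. \<sigma> (\<beta> / \<eta>) / (\<beta> / \<eta>))"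
    using coboundary_abs[OF anz aK] .
  have "inflate K m f \<sigma> = \<sigma> (\<beta> / \<eta>) / (\<beta> / \<eta>) * (\<sigma> \<eta> / \<eta>)" if s: "\<sigma> \<in> abs_gal K" for \<sigma>
  proof -
    have hs: "hom_on UNIV \<sigma>" using abs_gal_hom[OF s] .
    have "inflate K m f \<sigma> = restrict \<sigma> (cyc K m) \<beta> / \<beta>"
      unfolding inflate_def using fb restrict_in_gal[OF s] by blast
    also have "\<dots> = \<sigma> \<beta> / \<beta>" using bE by simp
    finally have i: "inflate K m f \<sigma> = \<sigma> \<beta> / \<beta>" .
    have "\<sigma> (\<beta> / \<eta>) = \<sigma> \<beta> / \<sigma> \<eta>" using hE_divide[OF subfield_UNIV hs] by simp
    moreover have "\<sigma> \<eta> \<noteq> 0" using hE_nz[OF subfield_UNIV hs] enz by simp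
    ultimately show ?thesis using i bnz enz by simp
  qed
  then have "cohomologous (abs_gal K) (\<lambda>\<sigma>. \<sigma>) (mu m) (inflate K m f) (\<lambda>\<sigma>. \<sigma> (\<beta> / \<eta>) / (\<beta> / \<eta>))"
    unfolding cohomologous_def using emu by blast
  then show "\<exists>c. cont_cocycle K (mu L) c \<and>
          cohomologous (abs_gal K) (\<lambda>\<sigma>. \<sigma>) (mu (L * n)) (inflate K (L * n) f) c"
    using cc m_def by blast
qed

lemma kummer_cocycle:
  fixes K :: "'a::field set"
  assumes yE: "y \<in> cyc K m" and ynz: "y \<noteq> 0" and xK: "y ^ m \<in> K"
  shows "cocycle (gal_cyc_comp K m) (gal_cyc K m) (\<lambda>g. g) (mu m) (\<lambda>g. g y / y)"
  using coboundary_gal[OF yE ynz xK] .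

lemma ii_imp_cb:
  fixes K :: "'a::{alg_closed_field, field_char_0} set"
  assumes K: "is_subfield K" and alg: "\<forall>x. algebraic_over K x" and L: "L > 0" and p: "prop_ii K L"
  shows "CB_prop K L"
  unfolding CB_prop_def
proof (intro allI impI ballI)
  fix n :: nat and x assume n: "n > 0" and xK: "x \<in> K - {0}" and ex: "\<exists>y\<in>cyc K (L * n) - {0}. x = y ^ (L * n)"
  define m where "m = L * n"
  have m: "m > 0" using L n m_def by simp
  have Ef: "is_subfield (cyc K m)" by (rule cyc_subfield)
  obtain y where yE: "y \<in> cyc K m" and ynz: "y \<noteq> 0" and xy: "x = y ^ m" using ex m_def by blast
  have f: "cocycle (gal_cyc_comp K m) (gal_cyc K m) (\<lambda>g. g) (mu m) (\<lambda>g. g y / y)"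
    using kummer_cocycle[OF yE ynz] xK xy by blast
  obtain c b where cc: "cocycle (gal_cyc_comp K m) (gal_cyc K m) (\<lambda>g. g) (mu L) c"
    and bmu: "b \<in> mu m" and coh: "\<forall>g\<in>gal_cyc K m. g y / y = c g * (g b / b)"
    using p n m_def f unfolding prop_ii_def cohomologous_def by blast
  have bE: "b \<in> cyc K m" using bmu mu_cyc by blast
  have bnz: "b \<noteq> 0" using mu_nz[OF m bmu] .
  define w where "w = y / b"
  have wE: "w \<in> cyc K m" unfolding w_def using sf_divide[OF Ef yE bE] .
  have wnz: "w \<noteq> 0" unfolding w_def using ynz bnz by simp
  have "g (w ^ L) = w ^ L" if g: "g \<in> gal_cyc K m" for g
  proof -
    have gb: "g b \<noteq> 0" using gal_nz[OF g bE bnz] .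
    have gw: "g w = g y / g b" unfolding w_def using hE_divide[OF Ef gal_hom[OF g] yE bE] .
    have e1: "g y / y = c g * (g b / b)" using coh g by blast
    then have e2: "g y = c g * (g b / b) * y" using ynz by (simp add: divide_eq_eq)
    have "g y / g b = c g * (y / b)" unfolding e2 using gb bnz by (simp add: field_simps)
    then have "g w = c g * w" using gw unfolding w_def by simp
    moreover have "c g ^ L = 1" using cc g unfolding cocycle_def mu_def by blast
    ultimately have "g w ^ L = w ^ L" by (simp add: power_mult_distrib)
    then show ?thesis using hE_pow[OF Ef gal_hom[OF g] wE] by simp
  qed
  then have zK: "w ^ L \<in> K" using fix_gal[OF K alg sr_pow[OF subfield_subring[OF Ef] wE]] by blast
  have "(w ^ L) ^ n = y ^ m / b ^ m" unfolding w_def m_def by (simp add: power_divide power_mult)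
  also have "\<dots> = x" using bmu xy unfolding mu_def by simp
  finally show "\<exists>z\<in>K - {0}. x = z ^ n" using zK wnz by force
qed

lemma i_imp_cb:
  fixes K :: "'a::{alg_closed_field, field_char_0} set"
  assumes K: "is_subfield K" and alg: "\<forall>x. algebraic_over K x" and L: "L > 0" and p: "prop_i K L"
  shows "CB_prop K L"
  unfolding CB_prop_def
proof (intro allI impI ballI)
  fix n :: nat and x assume n: "n > 0" and xK: "x \<in> K - {0}" and ex: "\<exists>y\<in>cyc K (L * n) - {0}. x = y ^ (L * n)"
  define m where "m = L * n"
  have m: "m > 0" using L n m_def by simp
  obtain y where yE: "y \<in> cyc K m" and ynz: "y \<noteq> 0" and xy: "x = y ^ m" using ex m_def by blast
  have f: "cocycle (gal_cyc_comp K m) (gal_cyc K m) (\<lambda>g. g) (mu m) (\<lambda>g. g y / y)"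
    using kummer_cocycle[OF yE ynz] xK xy by blast
  obtain c b where cc: "cont_cocycle K (mu L) c"
    and bmu: "b \<in> mu m" and coh: "\<forall>\<sigma>\<in>abs_gal K. inflate K m (\<lambda>g. g y / y) \<sigma> = c \<sigma> * (\<sigma> b / b)"
    using p n m_def f unfolding prop_i_def cohomologous_def by blast
  have bnz: "b \<noteq> 0" using mu_nz[OF m bmu] .
  define w where "w = y / b"
  have wnz: "w \<noteq> 0" unfolding w_def using ynz bnz by simp
  have "\<sigma> (w ^ L) = w ^ L" if s: "\<sigma> \<in> abs_gal K" for \<sigma>
  proof -
    have hs: "hom_on UNIV \<sigma>" using abs_gal_hom[OF s] .
    have gb: "\<sigma> b \<noteq> 0" using hE_nz[OF subfield_UNIV hs] bnz by simp
    have gw: "\<sigma> w = \<sigma> y / \<sigma> b" unfolding w_def using hE_divide[OF subfield_UNIV hs] by simp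
    have "inflate K m (\<lambda>g. g y / y) \<sigma> = \<sigma> y / y" unfolding inflate_def using yE by simp
    then have "\<sigma> y / y = c \<sigma> * (\<sigma> b / b)" using coh s by simp
    then have e2: "\<sigma> y = c \<sigma> * (\<sigma> b / b) * y" using ynz by (simp add: divide_eq_eq)
    have "\<sigma> y / \<sigma> b = c \<sigma> * (y / b)" unfolding e2 using gb bnz by (simp add: field_simps)
    then have "\<sigma> w = c \<sigma> * w" using gw unfolding w_def by simp
    moreover have "c \<sigma> ^ L = 1" using cc s unfolding cont_cocycle_def cocycle_def mu_def by blast
    ultimately have "\<sigma> w ^ L = w ^ L" by (simp add: power_mult_distrib)
    then show ?thesis using hE_pow[OF subfield_UNIV hs] by simp
  qed
  then have zK: "w ^ L \<in> K" using fix_abs[OF K alg] by blast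
  have "(w ^ L) ^ n = y ^ m / b ^ m" unfolding w_def m_def by (simp add: power_divide power_mult)
  also have "\<dots> = x" using bmu xy unfolding mu_def by simp
  finally show "\<exists>z\<in>K - {0}. x = z ^ n" using zK wnz by force
qed

lemma least_transfer:
  assumes "\<And>L. L > 0 \<Longrightarrow> P L = Q L" and "is_least_pos P \<Lambda>"
  shows "is_least_pos Q \<Lambda>"
  using assms unfolding is_least_pos_def by metis

theorem lemma2p1:
  fixes K :: "'a :: {alg_closed_field, field_char_0} set"
    and \<Lambda> :: nat
  assumes "is_subfield K"
    and "\<forall>x. algebraic_over K x"
    and "finite_over_Q (K_ab K)"
    and "is_least_pos (CB_prop K) \<Lambda>"
  shows "is_least_pos (prop_i K) \<Lambda> \<and> is_least_pos (prop_ii K) \<Lambda>"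
proof
  show "is_least_pos (prop_i K) \<Lambda>"
    using least_transfer[OF _ assms(4), of "prop_i K"] cb_imp_i[OF assms(1,2)] i_imp_cb[OF assms(1,2)] by blast
  show "is_least_pos (prop_ii K) \<Lambda>"
    using least_transfer[OF _ assms(4), of "prop_ii K"] cb_imp_ii[OF assms(1,2)] ii_imp_cb[OF assms(1,2)] by blast
qed

end
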